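(* Let $G=\langle g\rangle$ be cyclic of prime order $p$ and $B=\mathcal{O}G$. Then: (1) Every $I\in\operatorname{PI}(B)$ has homogeneous sign, i.e. either $I(\chi)\in\operatorname{Irr}(B)$ for all $\chi\in\operatorname{Irr}(B)$, or $-I(\chi)\in\operatorname{Irr}(B)$ for all $\chi\in\operatorname{Irr}(B)$. (2) Every $I\in\operatorname{PI}(B)$ with all-positive sign (i.e. $I(\chi)\in\operatorname{Irr}(B)$ for all $\chi\in\operatorname{Irr}(B)$) is a composition of isometries of the forms $I_\lambda$ ($\lambda\in\operatorname{Irr}(B)$) and $I_\sigma$ ($\sigma\in\operatorname{Aut}(G)$). (3) $\operatorname{PI}(B)\cong (G\rtimes\operatorname{Aut}(G))\times\langle -\mathrm{id}\rangle$, where $\langle-\mathrm{id}\rangle$ is cyclic of order 2 and $\operatorname{Aut}(G)$ acts naturally on $G$.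
   Context: Let $p$ be a prime, $\zeta$ a primitive $p$-th root of unity, $K=\mathbb{Q}_p(\zeta)$, $\mathcal{O}=\mathbb{Z}_p[\zeta]$. Let $G=\langle g\rangle$ be cyclic of order $p$; $B=\mathcal{O}G$ is its unique block and $\operatorname{Irr}(B)=\{\chi_0,\dots,\chi_{p-1}\}$ with $\chi_a(g^b)=\zeta^{ab}$. $R_K(B)$ is the free abelian group on $\operatorname{Irr}(B)$ with inner product $\langle\alpha,\beta\rangle=\frac1p\sum_{x\in G}\alpha(x)\beta(x^{-1})$. For a linear map $I:R_K(B)\to R_K(B)$ put $\mu_I(x,y)=\sum_{\chi\in\operatorname{Irr}(B)}I(\chi)(x)\chi(y)$, a generalized character of $G\times G$. A generalized character $\mu$ of $G\times G$ is perfect if (i) $\mu(x,y)/|C_G(x)|\in\mathcal{O}$ and $\mu(x,y)/|C_G(y)|\in\mathcal{O}$ for all $x,y$ (here $|C_G(x)|=p$); (ii) whenever $\mu(x,y)\ne0$, $x$ is $p$-regular (i.e. $x=1$) iff $y$ is $p$-regular. A perfect isometry of $R_K(B)$ is a bijective linear isometry $I$ of $R_K(B)$ with $\mu_I$ perfect; $\operatorname{PI}(B)$ is the group of these under composition. For $\lambda\in\operatorname{Irr}(B)$, $I_\lambda$ is the linear map with $I_\lambda(\chi)=\lambda\chi$ (pointwise product) for $\chi\in\operatorname{Irr}(B)$. For $\sigma\in\operatorname{Aut}(G)$, $I_\sigma$ is the linear map with $I_\sigma(\chi)=\chi^\sigma$, where $\chi^\sigma(h)=\chi(h^{\sigma^{-1}})$.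 *)

theory Defs
  imports Complex_Main "HOL-Computational_Algebra.Primes" "HOL-Algebra.Group"
begin

text \<open>Model: G = <g> of order p is represented by exponents {..<p} (b stands for g^b).
 Class functions on G are functions nat => complex vanishing outside {..<p}.
 Q(zeta) is embedded in the complex numbers, zeta = exp(2 pi i / p).\<close>

definition zeta :: "nat \<Rightarrow> complex" where
  "zeta p = cis (2 * pi / real p)"

definition chi :: "nat \<Rightarrow> nat \<Rightarrow> nat \<Rightarrow> complex" where
  "chi p a x = (if x < p then zeta p ^ (a * x) else 0)"

definition Irr :: "nat \<Rightarrow> (nat \<Rightarrow> complex) set" where
  "Irr p = chi p ` {..<p}"

text \<open>Elements of R_K(B) are given by integer coefficient vectors w.r.t. chi_0..chi_{p-1}.\<close>
definition Zsupp :: "nat \<Rightarrow> (nat \<Rightarrow> int) set" where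
  "Zsupp p = {c. \<forall>a. p \<le> a \<longrightarrow> c a = 0}"

definition vchar :: "nat \<Rightarrow> (nat \<Rightarrow> int) \<Rightarrow> nat \<Rightarrow> complex" where
  "vchar p c = (\<lambda>x. \<Sum>a<p. of_int (c a) * chi p a x)"

text \<open>inner product <alpha,beta> = 1/p sum_x alpha(x) beta(x^-1)\<close>
definition ip :: "nat \<Rightarrow> (nat \<Rightarrow> complex) \<Rightarrow> (nat \<Rightarrow> complex) \<Rightarrow> complex" where
  "ip p \<alpha> \<beta> = (1 / of_nat p) * (\<Sum>x<p. \<alpha> x * \<beta> ((p - x) mod p))"

text \<open>A Z-linear map I of R_K(B) is given by its integer matrix M:
  I(chi_a) = sum_b M a b chi_b.  Entries outside {..<p} x {..<p} are 0.\<close>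
definition mats :: "nat \<Rightarrow> (nat \<Rightarrow> nat \<Rightarrow> int) set" where
  "mats p = {M. \<forall>a b. (p \<le> a \<or> p \<le> b) \<longrightarrow> M a b = 0}"

definition lmap :: "nat \<Rightarrow> (nat \<Rightarrow> nat \<Rightarrow> int) \<Rightarrow> (nat \<Rightarrow> int) \<Rightarrow> nat \<Rightarrow> int" where
  "lmap p M c = (\<lambda>b. if b < p then (\<Sum>a<p. c a * M a b) else 0)"

definition img :: "nat \<Rightarrow> (nat \<Rightarrow> nat \<Rightarrow> int) \<Rightarrow> nat \<Rightarrow> nat \<Rightarrow> complex" where
  "img p M a = vchar p (M a)"

definition mu :: "nat \<Rightarrow> (nat \<Rightarrow> nat \<Rightarrow> int) \<Rightarrow> nat \<Rightarrow> nat \<Rightarrow> complex" where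
  "mu p M x y = (\<Sum>a<p. img p M a x * chi p a y)"

definition Zzeta :: "nat \<Rightarrow> complex set" where
  "Zzeta p = {z. \<exists>c :: nat \<Rightarrow> int. z = (\<Sum>k<p. of_int (c k) * zeta p ^ k)}"

text \<open>membership in O intersected with Q(zeta) (= Z_(p)[zeta])\<close>
definition in_O :: "nat \<Rightarrow> complex \<Rightarrow> bool" where
  "in_O p z \<longleftrightarrow> (\<exists>s :: int. coprime s (int p) \<and> of_int s * z \<in> Zzeta p)"

text \<open>perfectness; note |C_G(x)| = |C_G(y)| = p since G is abelian\<close>
definition perfect :: "nat \<Rightarrow> (nat \<Rightarrow> nat \<Rightarrow> int) \<Rightarrow> bool" where
  "perfect p M \<longleftrightarrow>
     (\<forall>x<p. \<forall>y<p. in_O p (mu p M x y / of_nat p) \<and> in_O p (mu p M x y / of_nat p)) \<and>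
     (\<forall>x<p. \<forall>y<p. mu p M x y \<noteq> 0 \<longrightarrow> (x = 0 \<longleftrightarrow> y = 0))"

definition isometry :: "nat \<Rightarrow> (nat \<Rightarrow> nat \<Rightarrow> int) \<Rightarrow> bool" where
  "isometry p M \<longleftrightarrow> (\<forall>c\<in>Zsupp p. \<forall>d\<in>Zsupp p.
      ip p (vchar p (lmap p M c)) (vchar p (lmap p M d)) = ip p (vchar p c) (vchar p d))"

definition PI :: "nat \<Rightarrow> (nat \<Rightarrow> nat \<Rightarrow> int) set" where
  "PI p = {M \<in> mats p. bij_betw (lmap p M) (Zsupp p) (Zsupp p) \<and> isometry p M \<and> perfect p M}"

text \<open>matrix of the composition I o J\<close>
definition mcomp :: "nat \<Rightarrow> (nat \<Rightarrow> nat \<Rightarrow> int) \<Rightarrow> (nat \<Rightarrow> nat \<Rightarrow> int) \<Rightarrow> nat \<Rightarrow> nat \<Rightarrow> int" where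
  "mcomp p I J = (\<lambda>a c. if a < p \<and> c < p then (\<Sum>b<p. J a b * I b c) else 0)"

definition idmat :: "nat \<Rightarrow> nat \<Rightarrow> nat \<Rightarrow> int" where
  "idmat p = (\<lambda>a b. if a < p \<and> b < p \<and> a = b then 1 else 0)"

definition PI_group :: "nat \<Rightarrow> (nat \<Rightarrow> nat \<Rightarrow> int) monoid" where
  "PI_group p = \<lparr>carrier = PI p, mult = mcomp p, one = idmat p\<rparr>"

definition mat_of :: "nat \<Rightarrow> (nat \<Rightarrow> nat \<Rightarrow> complex) \<Rightarrow> nat \<Rightarrow> nat \<Rightarrow> int" where
  "mat_of p f = (THE M. M \<in> mats p \<and> (\<forall>a<p. vchar p (M a) = f a))"

definition I_lam :: "nat \<Rightarrow> (nat \<Rightarrow> complex) \<Rightarrow> nat \<Rightarrow> nat \<Rightarrow> int" where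
  "I_lam p lam = mat_of p (\<lambda>a x. lam x * chi p a x)"

text \<open>Aut(G), automorphisms of Z/p (extended by the identity outside {..<p})\<close>
definition Aut :: "nat \<Rightarrow> (nat \<Rightarrow> nat) set" where
  "Aut p = {\<sigma>. bij_betw \<sigma> {..<p} {..<p} \<and>
             (\<forall>x<p. \<forall>y<p. \<sigma> ((x + y) mod p) = (\<sigma> x + \<sigma> y) mod p) \<and>
             (\<forall>x. p \<le> x \<longrightarrow> \<sigma> x = x)}"

definition chi_act :: "nat \<Rightarrow> (nat \<Rightarrow> nat) \<Rightarrow> (nat \<Rightarrow> complex) \<Rightarrow> nat \<Rightarrow> complex" where
  "chi_act p \<sigma> f = (\<lambda>h. if h < p then f (inv_into {..<p} \<sigma> h) else 0)"

definition I_sig :: "nat \<Rightarrow> (nat \<Rightarrow> nat) \<Rightarrow> nat \<Rightarrow> nat \<Rightarrow> int" where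
  "I_sig p \<sigma> = mat_of p (\<lambda>a. chi_act p \<sigma> (chi p a))"

definition sdp :: "nat \<Rightarrow> (nat \<times> (nat \<Rightarrow> nat)) monoid" where
  "sdp p = \<lparr>carrier = {..<p} \<times> Aut p,
            mult = (\<lambda>(h, \<sigma>) (h', \<sigma>'). ((h + \<sigma> h') mod p, \<sigma> \<circ> \<sigma>')),
            one = (0, id)\<rparr>"

text \<open>cyclic group of order 2 (= <-id>)\<close>
definition C2 :: "int monoid" where
  "C2 = \<lparr>carrier = {1, -1}, mult = (*), one = 1\<rparr>"

end

theory Submission
  imports Defs "HOL-Computational_Algebra.Polynomial_Factorial"
begin

definition w :: "nat \<Rightarrow> int \<Rightarrow> complex" where
  "w p k = cis (2 * pi * of_int k / real p)"

lemma w_add: "w p (k + l) = w p k * w p l"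
  by (simp add: w_def cis_mult add_divide_distrib distrib_left)

lemma w_0 [simp]: "w p 0 = 1" by (simp add: w_def)

lemma w_mult_p: "p > 0 \<Longrightarrow> w p (int p * j) = 1"
proof -
  assume "p > 0"
  hence "2 * pi * of_int (int p * j) / real p = 2 * pi * of_int j" by simp
  thus ?thesis unfolding w_def by simp
qed

lemma w_mod: "p > 0 \<Longrightarrow> w p (k mod int p) = w p k"
proof -
  assume p: "p > 0"
  have "w p k = w p (k mod int p + int p * (k div int p))" by simp
  also have "\<dots> = w p (k mod int p)" by (simp only: w_add w_mult_p[OF p] mult_1_right)
  finally show ?thesis by simp
qed

lemma w_cong: "p > 0 \<Longrightarrow> k mod int p = l mod int p \<Longrightarrow> w p k = w p l"
  by (metis w_mod)

lemma w_eq_1: "p > 0 \<Longrightarrow> w p k = 1 \<Longrightarrow> int p dvd k"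
proof -
  assume p: "p > 0" and "w p k = 1"
  hence "cos (2 * pi * of_int k / real p) = 1" unfolding w_def
    by (metis cis.sel(1) one_complex.simps(1))
  then obtain n :: int where n: "2 * pi * of_int k / real p = of_int n * 2 * pi"
    using cos_one_2pi_int by blast
  hence "real_of_int k = of_int n * real p" using p by (simp add: field_simps)
  hence "k = n * int p" by (metis of_int_eq_iff of_int_mult of_int_of_nat_eq)
  thus ?thesis by simp
qed

lemma w_pow: "w p k ^ n = w p (k * int n)"
  by (induct n) (simp_all add: w_add algebra_simps)

lemma zeta_pow: "zeta p ^ n = w p (int n)"
  unfolding zeta_def w_def DeMoivre by (simp add: field_simps)

lemma w_norm: "w p k * w p (- k) = 1"
  by (metis add.right_inverse w_0 w_add)

lemma geom_w: "p > 0 \<Longrightarrow> (\<Sum>x<p. w p (k * int x)) = (if int p dvd k then of_nat p else 0)"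
proof (cases "int p dvd k")
  case True
  assume p: "p > 0"
  from True obtain j where "k = int p * j" by blast
  hence "\<And>x. w p (k * int x) = 1" using p by (metis mult.assoc w_mult_p)
  thus ?thesis using True by simp
next
  case False
  assume p: "p > 0"
  have ne: "w p k \<noteq> 1" using False w_eq_1 p by blast
  have "(\<Sum>x<p. w p (k * int x)) = (\<Sum>x<p. w p k ^ x)" by (simp add: w_pow)
  also have "\<dots> = (w p k ^ p - 1) / (w p k - 1)" by (rule geometric_sum[OF ne])
  also have "w p k ^ p = 1" using w_mult_p[OF p, of k] by (simp add: w_pow mult.commute)
  finally show ?thesis using False by simp
qed

definition Phi :: "nat \<Rightarrow> int poly" where
  "Phi p = (\<Sum>k<p. [:0,1:] ^ k)"

lemma pcompose_pow: "pcompose (q ^ n) r = (pcompose q r) ^ n"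
  by (induct n) (simp_all add: pcompose_1 pcompose_mult)

lemma coeff_x_pow: "coeff ([:0,1::'a::comm_semiring_1:] ^ k) n = (if n = k then 1 else 0)"
  by (metis coeff_monom monom_altdef smult_1_left)

lemma coeff_Phi: "coeff (Phi p) n = (if n < p then 1 else 0)"
  unfolding Phi_def coeff_sum coeff_x_pow by (simp add: sum.delta)

lemma degree_Phi: "p > 0 \<Longrightarrow> degree (Phi p) = p - 1"
proof -
  assume p: "p > 0"
  have "degree (Phi p) \<le> p - 1"
    by (rule degree_le) (auto simp: coeff_Phi)
  moreover have "coeff (Phi p) (p - 1) \<noteq> 0" using p by (simp add: coeff_Phi)
  ultimately show ?thesis by (metis le_antisym le_degree)
qed

definition Psi :: "nat \<Rightarrow> int poly" where
  "Psi p = pcompose (Phi p) [:1,1:]"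

lemma Psi_eq: "pCons 0 (Psi p) = [:1,1:] ^ p - 1"
proof -
  have "[:0,1:] ^ p - 1 = ([:0,1:] - 1) * Phi p"
    unfolding Phi_def by (rule power_diff_1_eq)
  hence "pcompose ([:0,1::int:] ^ p - 1) [:1,1:] = pcompose (([:0,1:] - 1) * Phi p) [:1,1:]"
    by simp
  hence "[:1,1:] ^ p - 1 = pcompose ([:0,1:] - 1) [:1,1::int:] * Psi p"
    by (simp add: pcompose_diff pcompose_pow pcompose_1 pcompose_mult Psi_def pcompose_pCons)
  also have "pcompose ([:0,1:] - 1) [:1,1::int:] = [:0,1:]"
    by (simp add: pcompose_diff pcompose_1 pcompose_pCons one_pCons)
  finally show ?thesis by simp
qed

lemma coeff_Psi: "coeff (Psi p) k = int (p choose (Suc k))"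
proof -
  have "coeff (Psi p) k = coeff (pCons 0 (Psi p)) (Suc k)" by simp
  also have "\<dots> = coeff ([:1,1:] ^ p) (Suc k)" unfolding Psi_eq by simp
  also have "\<dots> = int (p choose (Suc k))"
  proof (cases "Suc k \<le> p")
    case True thus ?thesis by (simp add: coeff_linear_poly_power)
  next
    case False
    hence "coeff ([:1,1::int:] ^ p) (Suc k) = 0"
      by (intro coeff_eq_0) (simp add: degree_linear_power)
    thus ?thesis using False by simp
  qed
  finally show ?thesis .
qed

lemma eis_aux:
  fixes F G P :: "int poly" and q :: int
  assumes pr: "prime q" and FG: "P = F * G" and dv: "\<forall>k<degree P. q dvd coeff P k"
    and F0: "q dvd coeff F 0" and G0: "\<not> q dvd coeff G 0" and lF: "\<not> q dvd lead_coeff F"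
    and dF: "degree F < degree P"
  shows False
proof -
  define i where "i = (LEAST i. \<not> q dvd coeff F i)"
  have ex: "\<not> q dvd coeff F (degree F)" using lF by simp
  have i1: "\<not> q dvd coeff F i" unfolding i_def by (rule LeastI[of _ "degree F"], rule ex)
  have i2: "i \<le> degree F" unfolding i_def by (rule Least_le, rule ex)
  have lt: "\<And>j. j < i \<Longrightarrow> q dvd coeff F j" unfolding i_def using not_less_Least by blast
  have "q dvd coeff P i" using dv i2 dF by auto
  also have "coeff P i = (\<Sum>j\<le>i. coeff F j * coeff G (i - j))" unfolding FG coeff_mult ..
  also have "\<dots> = (\<Sum>j<i. coeff F j * coeff G (i - j)) + coeff F i * coeff G 0"
    by (simp add: lessThan_Suc_atMost[symmetric])
  finally have "q dvd (\<Sum>j<i. coeff F j * coeff G (i - j)) + coeff F i * coeff G 0" .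
  moreover have "q dvd (\<Sum>j<i. coeff F j * coeff G (i - j))"
    by (rule dvd_sum) (simp add: lt)
  ultimately have "q dvd coeff F i * coeff G 0" using dvd_add_right_iff by blast
  thus False using i1 G0 pr prime_dvd_mult_iff by blast
qed

lemma eisenstein:
  fixes F G P :: "int poly" and q :: int
  assumes pr: "prime q" and FG: "P = F * G" and dv: "\<forall>k<degree P. q dvd coeff P k"
    and P0: "\<not> q^2 dvd coeff P 0" and lP: "\<not> q dvd lead_coeff P"
    and dF: "degree F \<ge> 1" and dG: "degree G \<ge> 1"
  shows False
proof -
  have nz: "F \<noteq> 0" "G \<noteq> 0" using dF dG by auto
  have deg: "degree P = degree F + degree G" using FG nz degree_mult_eq by blast
  have "q dvd coeff P 0" using dv deg dF by auto
  hence c0: "q dvd coeff F 0 * coeff G 0" using FG by (simp add: coeff_mult_0)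
  have l: "lead_coeff P = lead_coeff F * lead_coeff G" using FG lead_coeff_mult by blast
  have lF: "\<not> q dvd lead_coeff F" "\<not> q dvd lead_coeff G" using lP l by auto
  have not_both: "\<not> (q dvd coeff F 0 \<and> q dvd coeff G 0)"
  proof
    assume "q dvd coeff F 0 \<and> q dvd coeff G 0"
    hence "q * q dvd coeff F 0 * coeff G 0" by (auto intro: mult_dvd_mono)
    thus False using P0 FG by (simp add: coeff_mult_0 power2_eq_square)
  qed
  from c0 pr have "q dvd coeff F 0 \<or> q dvd coeff G 0" using prime_dvd_mult_iff by blast
  thus False
  proof
    assume "q dvd coeff F 0"
    thus False using eis_aux[OF pr FG dv _ _ lF(1)] not_both deg dG by auto
  next
    assume "q dvd coeff G 0"
    thus False using eis_aux[OF pr _ dv _ _ lF(2), of F] FG not_both deg dF by (auto simp: mult.commute)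
  qed
qed

lemma const_factor_unit:
  fixes f g :: "int poly"
  assumes "coeff (f * g) 0 = 1" "degree f = 0"
  shows "f dvd 1"
proof -
  from assms(2) obtain c where c: "f = [:c:]" by (metis degree_eq_zeroE)
  have "c * coeff g 0 = 1" using assms(1) c by (simp add: coeff_mult_0)
  hence "c dvd 1" by (metis dvdI)
  thus ?thesis using c by (simp add: is_unit_poly_iff)
qed

lemma Phi_irreducible:
  assumes pr: "prime p"
  shows "irreducible (Phi p)"
proof -
  have p1: "p > 1" using pr prime_gt_1_nat by blast
  have c0: "coeff (Phi p) 0 = 1" using p1 by (simp add: coeff_Phi)
  have dPhi: "degree (Phi p) = p - 1" using p1 by (simp add: degree_Phi)
  show ?thesis
  proof (rule irreducibleI)
    show "Phi p \<noteq> 0" using c0 by auto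
    show "\<not> Phi p dvd 1"
    proof
      assume "Phi p dvd 1"
      then obtain c where "Phi p = [:c:]" by (auto simp: is_unit_poly_iff)
      hence "degree (Phi p) = 0" by simp
      thus False using dPhi p1 by simp
    qed
    fix f g assume fg: "Phi p = f * g"
    show "f dvd 1 \<or> g dvd 1"
    proof (rule ccontr)
      assume nu: "\<not> (f dvd 1 \<or> g dvd 1)"
      have dF: "degree f \<ge> 1"
      proof (rule ccontr)
        assume "\<not> degree f \<ge> 1"
        hence "degree f = 0" by simp
        thus False using const_factor_unit[of f g] c0 fg nu by auto
      qed
      have dG: "degree g \<ge> 1"
      proof (rule ccontr)
        assume "\<not> degree g \<ge> 1"
        hence "degree g = 0" by simp
        thus False using const_factor_unit[of g f] c0 fg nu by (auto simp: mult.commute)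
      qed
      have PFG: "Psi p = pcompose f [:1,1:] * pcompose g [:1,1:]"
        unfolding Psi_def fg pcompose_mult ..
      have dPsi: "degree (Psi p) = p - 1" unfolding Psi_def degree_pcompose dPhi by simp
      have prp: "prime (int p)" using pr by simp
      show False
      proof (rule eisenstein[OF prp PFG])
        show "\<forall>k<degree (Psi p). int p dvd coeff (Psi p) k"
        proof (intro allI impI)
          fix k assume "k < degree (Psi p)"
          hence "Suc k < p" using dPsi by simp
          hence "p dvd (p choose Suc k)" using pr p1 by (intro dvd_choose_prime) auto
          thus "int p dvd coeff (Psi p) k" by (simp add: coeff_Psi)
        qed
        show "\<not> (int p)^2 dvd coeff (Psi p) 0"
        proof
          assume "(int p)^2 dvd coeff (Psi p) 0"
          hence "int p * int p dvd int p * 1" by (simp add: coeff_Psi power2_eq_square)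
          hence "int p dvd 1" using p1 by (subst (asm) dvd_times_left_cancel_iff) auto
          thus False using p1 by simp
        qed
        show "\<not> int p dvd lead_coeff (Psi p)"
          using p1 by (simp add: dPsi coeff_Psi)
        show "1 \<le> degree (pcompose f [:1,1:])" using dF by (simp add: degree_pcompose)
        show "1 \<le> degree (pcompose g [:1,1:])" using dG by (simp add: degree_pcompose)
      qed
    qed
  qed
qed

definition ev :: "nat \<Rightarrow> int poly \<Rightarrow> complex" where
  "ev p D = poly (map_poly of_int D) (w p 1)"

lemma map_poly_of_int_mult:
  "map_poly (of_int :: int \<Rightarrow> complex) (D * E) = map_poly of_int D * map_poly of_int E"
  by (rule poly_eqI) (simp add: coeff_map_poly coeff_mult)

lemma map_poly_of_int_add:
  "map_poly (of_int :: int \<Rightarrow> complex) (D + E) = map_poly of_int D + map_poly of_int E"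
  by (rule poly_eqI) (simp add: coeff_map_poly)

lemma map_poly_of_int_smult:
  "map_poly (of_int :: int \<Rightarrow> complex) (smult a E) = smult (of_int a) (map_poly of_int E)"
  by (rule poly_eqI) (simp add: coeff_map_poly)

lemma ev_mult: "ev p (D * E) = ev p D * ev p E"
  by (simp add: ev_def map_poly_of_int_mult)

lemma ev_add: "ev p (D + E) = ev p D + ev p E"
  by (simp add: ev_def map_poly_of_int_add)

lemma ev_smult: "ev p (smult a E) = of_int a * ev p E"
  by (simp add: ev_def map_poly_of_int_smult)

lemma ev_const: "ev p [:c:] = of_int c"
  by (cases "c = 0") (simp_all add: ev_def map_poly_pCons)

lemma ev_sum:
  assumes "degree D < N"
  shows "ev p D = (\<Sum>i<N. of_int (coeff D i) * w p (int i))"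
proof -
  have dm: "degree (map_poly (of_int :: int \<Rightarrow> complex) D) = degree D"
    by (rule degree_map_poly) simp
  have "ev p D = (\<Sum>i\<le>degree D. of_int (coeff D i) * w p 1 ^ i)"
    unfolding ev_def poly_altdef dm by (simp add: coeff_map_poly)
  also have "\<dots> = (\<Sum>i<N. of_int (coeff D i) * w p 1 ^ i)"
  proof (rule sum.mono_neutral_left)
    show "\<forall>i\<in>{..<N} - {..degree D}. of_int (coeff D i) * w p 1 ^ i = 0"
      by (auto simp: coeff_eq_0)
  qed (use assms in auto)
  finally show ?thesis by (simp add: w_pow)
qed

lemma ev_Phi: "p > 1 \<Longrightarrow> ev p (Phi p) = 0"
proof -
  assume p1: "p > 1"
  have "ev p (Phi p) = (\<Sum>i<p. of_int (coeff (Phi p) i) * w p (int i))"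
    by (rule ev_sum) (use p1 degree_Phi in auto)
  also have "\<dots> = (\<Sum>i<p. w p (1 * int i))" by (simp add: coeff_Phi)
  also have "\<dots> = 0" using p1 by (subst geom_w) auto
  finally show ?thesis .
qed

lemma root_deg:
  assumes pr: "prime p"
  shows "D \<noteq> 0 \<Longrightarrow> ev p D = 0 \<Longrightarrow> degree D \<ge> p - 1"
proof (induction "degree D" arbitrary: D rule: less_induct)
  case less
  have p1: "p > 1" using pr prime_gt_1_nat by blast
  have prPhi: "prime_elem (Phi p)" using Phi_irreducible[OF pr] by (rule irreducible_imp_prime_elem)
  show ?case
  proof (rule ccontr)
    assume lt: "\<not> degree D \<ge> p - 1"
    define r where "r = pseudo_mod (Phi p) D"
    obtain a q where aq: "a \<noteq> 0" "smult a (Phi p) = D * q + r"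
      using pseudo_mod(1)[OF less.prems(1)] unfolding r_def by blast
    have rd: "r = 0 \<or> degree r < degree D"
      using pseudo_mod(2)[OF less.prems(1)] unfolding r_def by blast
    have "ev p (smult a (Phi p)) = 0" using p1 by (simp add: ev_smult ev_Phi)
    hence evr: "ev p r = 0" using aq(2) less.prems(2) by (simp add: ev_add ev_mult)
    have r0: "r = 0"
    proof (rule ccontr)
      assume "r \<noteq> 0"
      hence "degree r < degree D" using rd by simp
      moreover from this have "degree r \<ge> p - 1" using less.hyps \<open>r \<noteq> 0\<close> evr by blast
      ultimately show False using lt by simp
    qed
    have "D * q = [:a:] * Phi p" using aq(2) r0 by simp
    hence "Phi p dvd D * q" by (simp add: dvd_smult)
    hence "Phi p dvd D \<or> Phi p dvd q" using prPhi prime_elem_dvd_mult_iff by blast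
    thus False
    proof
      assume "Phi p dvd D"
      hence "degree (Phi p) \<le> degree D" using less.prems(1) dvd_imp_degree_le by blast
      thus False using lt p1 by (simp add: degree_Phi)
    next
      assume "Phi p dvd q"
      then obtain s where s: "q = Phi p * s" by blast
      have "[:a:] * Phi p = (D * s) * Phi p" using aq(2) r0 s by (simp add: mult_ac)
      moreover have "Phi p \<noteq> 0" using prPhi by auto
      ultimately have "[:a:] = D * s" using mult_cancel_right by blast
      moreover have "s \<noteq> 0" using aq(1) calculation by auto
      ultimately have "degree (D * s) = degree D + degree s" using less.prems(1) by (intro degree_mult_eq) auto
      moreover have "degree (D * s) = 0" using \<open>[:a:] = D * s\<close>[symmetric] by simp
      ultimately have "degree D = 0" by simp
      then obtain c where c: "D = [:c:]" by (metis degree_eq_zeroE)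
      hence "ev p D = of_int c" by (simp add: ev_const)
      thus False using less.prems c by simp
    qed
  qed
qed

lemma key:
  assumes pr: "prime p" and sum0: "(\<Sum>k<p. of_int (d k) * w p (int k)) = 0"
  shows "\<forall>k<p. d k = d 0"
proof -
  have p1: "p > 1" using pr prime_gt_1_nat by blast
  define D :: "int poly" where "D = (\<Sum>k<p. monom (d k) k)"
  define E where "E = D - smult (d (p - 1)) (Phi p)"
  have cD: "coeff D k = (if k < p then d k else 0)" for k
    unfolding D_def coeff_sum by (simp add: coeff_monom sum.delta')
  have cE: "coeff E k = (if k < p then d k - d (p - 1) else 0)" for k
    unfolding E_def by (simp add: cD coeff_Phi)
  have dE: "degree E < p" by (rule degree_lessI) (use p1 cE in auto)
  have "ev p E = (\<Sum>k<p. of_int (coeff E k) * w p (int k))" by (rule ev_sum[OF dE])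
  also have "\<dots> = (\<Sum>k<p. of_int (d k) * w p (int k)) - of_int (d (p - 1)) * (\<Sum>k<p. w p (1 * int k))"
    by (simp add: cE algebra_simps sum_subtractf sum_distrib_left)
  also have "\<dots> = 0" using sum0 p1 by (subst geom_w) auto
  finally have evE: "ev p E = 0" .
  have E0: "E = 0"
  proof (rule ccontr)
    assume "E \<noteq> 0"
    hence "degree E \<ge> p - 1" using root_deg[OF pr] evE by blast
    moreover have "coeff E (p - 1) = 0" using cE by simp
    ultimately have "degree E \<noteq> p - 1 \<or> E = 0" by (metis leading_coeff_0_iff)
    hence "degree E \<ge> p" using \<open>degree E \<ge> p - 1\<close> \<open>E \<noteq> 0\<close> by auto
    with dE show False by simp
  qed
  show ?thesis
  proof (intro allI impI)
    fix k assume "k < p"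
    hence "d k = d (p - 1)" "d 0 = d (p - 1)" using E0 cE[of k] cE[of 0] p1 by auto
    thus "d k = d 0" by simp
  qed
qed

lemma chi_w: "x < p \<Longrightarrow> chi p a x = w p (int a * int x)"
  by (simp add: chi_def zeta_pow)

lemma chi_neg: "p > 0 \<Longrightarrow> x < p \<Longrightarrow> chi p b ((p - x) mod p) = w p (- (int b * int x))"
proof -
  assume p: "p > 0" and x: "x < p"
  have e1: "int ((p - x) mod p) = (int p - int x) mod int p" using x by (simp add: zmod_int of_nat_diff)
  have "chi p b ((p - x) mod p) = w p (int b * int ((p - x) mod p))" using p by (simp add: chi_w)
  also have "\<dots> = w p (int b * (int p - int x))"
    by (rule w_cong[OF p]) (simp only: e1 mod_mult_right_eq)
  also have "int b * (int p - int x) = - (int b * int x) + int p * int b" by (simp add: algebra_simps)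
  also have "w p \<dots> = w p (- (int b * int x))" by (simp only: w_add w_mult_p[OF p] mult_1_right)
  finally show ?thesis .
qed

lemma orth:
  assumes p: "p > 0" and a: "a < p" and b: "b < p"
  shows "(\<Sum>x<p. chi p a x * chi p b ((p - x) mod p)) = (if a = b then of_nat p else 0)"
proof -
  have "(\<Sum>x<p. chi p a x * chi p b ((p - x) mod p)) = (\<Sum>x<p. w p ((int a - int b) * int x))"
  proof (rule sum.cong)
    fix x assume "x \<in> {..<p}"
    hence x: "x < p" by simp
    have "chi p a x * chi p b ((p - x) mod p) = w p (int a * int x) * w p (- (int b * int x))"
      by (simp only: chi_neg[OF p x] chi_w[OF x])
    also have "\<dots> = w p ((int a - int b) * int x)" by (simp only: w_add[symmetric]) (simp add: algebra_simps)
    finally show "chi p a x * chi p b ((p - x) mod p) = w p ((int a - int b) * int x)" .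
  qed simp
  also have "\<dots> = (if int p dvd (int a - int b) then of_nat p else 0)" by (rule geom_w[OF p])
  also have "int p dvd (int a - int b) \<longleftrightarrow> a = b"
  proof
    assume "int p dvd (int a - int b)"
    then obtain k where k: "int a - int b = int p * k" by blast
    have "\<bar>int a - int b\<bar> < int p" using a b by simp
    hence "k = 0" using k p by (cases "k = 0") (auto simp: abs_mult)
    thus "a = b" using k by simp
  qed simp
  finally show ?thesis .
qed

lemma ip_vchar:
  assumes p: "p > 0"
  shows "ip p (vchar p c) (vchar p d) = of_int (\<Sum>a<p. c a * d a)"
proof -
  define F where "F = (\<lambda>a b x. of_int (c a) * of_int (d b) * (chi p a x * chi p b ((p - x) mod p)))"
  have "(\<Sum>x<p. vchar p c x * vchar p d ((p - x) mod p)) = (\<Sum>x<p. \<Sum>a<p. \<Sum>b<p. F a b x)"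
    unfolding vchar_def sum_product F_def by (intro sum.cong refl) (simp add: ac_simps)
  also have "\<dots> = (\<Sum>a<p. \<Sum>x<p. \<Sum>b<p. F a b x)" by (rule sum.swap)
  also have "\<dots> = (\<Sum>a<p. \<Sum>b<p. \<Sum>x<p. F a b x)" by (intro sum.cong refl sum.swap)
  also have "\<dots> = (\<Sum>a<p. \<Sum>b<p. of_int (c a) * of_int (d b) * (if a = b then of_nat p else 0))"
    unfolding F_def by (intro sum.cong refl) (simp add: sum_distrib_left[symmetric] orth p)
  also have "\<dots> = (\<Sum>a<p. of_int (c a) * of_int (d a) * of_nat p)"
  proof (intro sum.cong refl)
    fix a assume "a \<in> {..<p}"
    have "(\<Sum>b<p. of_int (c a) * of_int (d b) * (if a = b then of_nat p else 0 :: complex))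
        = (\<Sum>b<p. if a = b then of_int (c a) * of_int (d b) * of_nat p else 0)"
      by (rule sum.cong) auto
    also have "\<dots> = of_int (c a) * of_int (d a) * of_nat p" using \<open>a \<in> {..<p}\<close> by (simp add: sum.delta)
    finally show "(\<Sum>b<p. of_int (c a) * of_int (d b) * (if a = b then of_nat p else 0 :: complex))
        = of_int (c a) * of_int (d a) * of_nat p" .
  qed
  finally show ?thesis unfolding ip_def using p by (simp add: sum_distrib_right[symmetric])
qed

lemma vchar_unit: assumes b: "b < p" shows "vchar p (\<lambda>a. if a = b then 1 else 0) = chi p b"
proof
  fix x
  have "vchar p (\<lambda>a. if a = b then 1 else 0) x = (\<Sum>a<p. if a = b then chi p a x else 0)"
    unfolding vchar_def by (rule sum.cong) auto
  also have "\<dots> = chi p b x" using b by (simp add: sum.delta)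
  finally show "vchar p (\<lambda>a. if a = b then 1 else 0) x = chi p b x" .
qed

lemma vchar_coeff:
  assumes p: "p > 0" and b: "b < p"
  shows "ip p (vchar p c) (chi p b) = of_int (c b)"
  using ip_vchar[OF p, of c "\<lambda>a. if a = b then 1 else 0"] vchar_unit[OF b] b
  by (simp add: if_distrib sum.delta' cong: if_cong)

lemma vchar_inj:
  assumes p: "p > 0" and eq: "vchar p c = vchar p c'" and b: "b < p"
  shows "c b = c' b"
  using vchar_coeff[OF p b, of c] vchar_coeff[OF p b, of c'] eq by simp

lemma mat_of_eq:
  assumes p: "p > 0" and M: "M \<in> mats p" and f: "\<forall>a<p. vchar p (M a) = f a"
  shows "mat_of p f = M"
  unfolding mat_of_def
proof (rule the_equality)
  show "M \<in> mats p \<and> (\<forall>a<p. vchar p (M a) = f a)" using M f by blast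
  fix M' assume M': "M' \<in> mats p \<and> (\<forall>a<p. vchar p (M' a) = f a)"
  show "M' = M"
  proof (intro ext)
    fix a b
    show "M' a b = M a b"
    proof (cases "a < p \<and> b < p")
      case True
      hence "vchar p (M' a) = vchar p (M a)" using M' f by simp
      thus ?thesis using vchar_inj[OF p _ ] True by blast
    next
      case False
      thus ?thesis using M M' unfolding mats_def by auto
    qed
  qed
qed

definition R :: "nat \<Rightarrow> (nat \<Rightarrow> nat \<Rightarrow> int) \<Rightarrow> nat \<Rightarrow> nat \<Rightarrow> int" where
  "R p M a a' = (\<Sum>b<p. M a b * M a' b)"

lemma lmap_prod:
  "(\<Sum>b<p. lmap p M c b * lmap p M d b) = (\<Sum>a<p. \<Sum>a'<p. c a * d a' * R p M a a')"
proof -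
  define F where "F = (\<lambda>a a' b. c a * d a' * (M a b * M a' b))"
  have "(\<Sum>b<p. lmap p M c b * lmap p M d b) = (\<Sum>b<p. \<Sum>a<p. \<Sum>a'<p. F a a' b)"
    unfolding lmap_def F_def by (intro sum.cong refl) (simp add: sum_product ac_simps)
  also have "\<dots> = (\<Sum>a<p. \<Sum>b<p. \<Sum>a'<p. F a a' b)" by (rule sum.swap)
  also have "\<dots> = (\<Sum>a<p. \<Sum>a'<p. \<Sum>b<p. F a a' b)" by (intro sum.cong refl sum.swap)
  also have "\<dots> = (\<Sum>a<p. \<Sum>a'<p. c a * d a' * R p M a a')"
    unfolding F_def R_def by (simp add: sum_distrib_left)
  finally show ?thesis .
qed

definition ev1 :: "nat \<Rightarrow> nat \<Rightarrow> int" where "ev1 a = (\<lambda>x. if x = a then 1 else 0)"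

lemma ev1_Zsupp: "a < p \<Longrightarrow> ev1 a \<in> Zsupp p"
  by (auto simp: ev1_def Zsupp_def)

lemma single_delta: "a < p \<Longrightarrow> (\<Sum>y<p. ev1 a y * (g y :: int)) = g a"
proof -
  assume a: "a < p"
  have "(\<Sum>y<p. ev1 a y * g y) = (\<Sum>y<p. if y = a then g y else 0)"
    by (intro sum.cong refl) (auto simp: ev1_def)
  thus ?thesis using a by (simp add: sum.delta')
qed

lemma double_delta:
  assumes "a < p" "a' < p"
  shows "(\<Sum>x<p. \<Sum>y<p. ev1 a x * ev1 a' y * (f x y :: int)) = f a a'"
proof -
  have "(\<Sum>x<p. \<Sum>y<p. ev1 a x * ev1 a' y * f x y) = (\<Sum>x<p. ev1 a x * (\<Sum>y<p. ev1 a' y * f x y))"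
    by (simp add: sum_distrib_left mult.assoc)
  also have "\<dots> = (\<Sum>x<p. ev1 a x * f x a')" using assms(2) by (simp add: single_delta)
  also have "\<dots> = f a a'" using assms(1) by (simp add: single_delta)
  finally show ?thesis .
qed

lemma sum_ev1: "a < p \<Longrightarrow> a' < p \<Longrightarrow> (\<Sum>x<p. ev1 a x * ev1 a' x) = (if a = a' then 1 else 0)"
proof -
  assume "a < p" "a' < p"
  have "(\<Sum>x<p. ev1 a x * ev1 a' x) = (\<Sum>x<p. if x = a then (if a = a' then 1 else 0) else 0)"
    by (intro sum.cong refl) (auto simp: ev1_def)
  thus ?thesis using \<open>a < p\<close> by (simp add: sum.delta)
qed

lemma iso_R:
  assumes p: "p > 0" and iso: "isometry p M" and a: "a < p" and a': "a' < p"
  shows "R p M a a' = (if a = a' then 1 else 0)"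
proof -
  have "ip p (vchar p (lmap p M (ev1 a))) (vchar p (lmap p M (ev1 a'))) = ip p (vchar p (ev1 a)) (vchar p (ev1 a'))"
    using iso ev1_Zsupp a a' unfolding isometry_def by blast
  hence "of_int (\<Sum>b<p. lmap p M (ev1 a) b * lmap p M (ev1 a') b) = (of_int (\<Sum>x<p. ev1 a x * ev1 a' x) :: complex)"
    unfolding ip_vchar[OF p] .
  hence "(\<Sum>b<p. lmap p M (ev1 a) b * lmap p M (ev1 a') b) = (\<Sum>x<p. ev1 a x * ev1 a' x)"
    by (rule of_int_eq_iff[THEN iffD1])
  thus ?thesis unfolding lmap_prod double_delta[OF a a'] sum_ev1[OF a a'] .
qed

lemma R_iso:
  assumes p: "p > 0" and RR: "\<forall>a<p. \<forall>a'<p. R p M a a' = (if a = a' then 1 else 0)"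
  shows "isometry p M"
  unfolding isometry_def
proof (intro ballI)
  fix c d
  have "(\<Sum>a<p. \<Sum>a'<p. c a * d a' * R p M a a') = (\<Sum>a<p. \<Sum>a'<p. if a' = a then c a * d a else 0)"
    using RR by (intro sum.cong refl) auto
  also have "\<dots> = (\<Sum>a<p. c a * d a)" by (simp add: sum.delta)
  finally show "ip p (vchar p (lmap p M c)) (vchar p (lmap p M d)) = ip p (vchar p c) (vchar p d)"
    unfolding ip_vchar[OF p] lmap_prod by simp
qed

lemma row_unit:
  fixes f :: "nat \<Rightarrow> int"
  assumes s: "(\<Sum>b<p. f b * f b) = 1"
  shows "\<exists>b<p. (f b = 1 \<or> f b = -1) \<and> (\<forall>b'<p. b' \<noteq> b \<longrightarrow> f b' = 0)"
proof -
  obtain b where b: "b < p" "f b \<noteq> 0"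
  proof (rule ccontr)
    assume "\<not> thesis"
    hence "\<forall>b<p. f b = 0" using that by blast
    hence "(\<Sum>b<p. f b * f b) = 0" by simp
    thus False using s by simp
  qed
  have split: "(\<Sum>b<p. f b * f b) = f b * f b + (\<Sum>b'\<in>{..<p} - {b}. f b' * f b')"
    using b by (subst sum.remove[of _ b]) auto
  have nn: "(\<Sum>b'\<in>{..<p} - {b}. f b' * f b') \<ge> 0" by (intro sum_nonneg) simp
  have "f b * f b > 0" using b(2) by (auto simp: zero_less_mult_iff)
  hence "f b * f b \<ge> 1" by linarith
  hence fb: "f b * f b = 1" and rest: "(\<Sum>b'\<in>{..<p} - {b}. f b' * f b') = 0"
    using s split nn by linarith+
  have "\<forall>b'\<in>{..<p} - {b}. f b' * f b' = 0"
    using rest by (subst (asm) sum_nonneg_eq_0_iff) auto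
  hence "\<forall>b'<p. b' \<noteq> b \<longrightarrow> f b' = 0" by auto
  moreover have "f b = 1 \<or> f b = -1" using fb by (metis zmult_eq_1_iff)
  ultimately show ?thesis using b by blast
qed

definition pi_of :: "nat \<Rightarrow> (nat \<Rightarrow> nat \<Rightarrow> int) \<Rightarrow> nat \<Rightarrow> nat" where
  "pi_of p M a = (SOME b. b < p \<and> M a b \<noteq> 0)"

lemma pi_of_props:
  assumes p: "p > 0" and iso: "isometry p M" and a: "a < p"
  shows "pi_of p M a < p" "M a (pi_of p M a) = 1 \<or> M a (pi_of p M a) = -1"
        "\<And>b. b < p \<Longrightarrow> b \<noteq> pi_of p M a \<Longrightarrow> M a b = 0"
proof -
  have "(\<Sum>b<p. M a b * M a b) = 1" using iso_R[OF p iso a a] unfolding R_def by simp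
  then obtain b where b: "b < p" "M a b = 1 \<or> M a b = -1" "\<forall>b'<p. b' \<noteq> b \<longrightarrow> M a b' = 0"
    using row_unit by blast
  have "b < p \<and> M a b \<noteq> 0" using b by auto
  moreover have "\<And>b'. b' < p \<and> M a b' \<noteq> 0 \<Longrightarrow> b' = b" using b by auto
  ultimately have eq: "pi_of p M a = b" unfolding pi_of_def by (rule some_equality)
  show "pi_of p M a < p" "M a (pi_of p M a) = 1 \<or> M a (pi_of p M a) = -1"
       "\<And>b'. b' < p \<Longrightarrow> b' \<noteq> pi_of p M a \<Longrightarrow> M a b' = 0"
    using b eq by auto
qed

lemma pi_of_inj:
  assumes p: "p > 0" and iso: "isometry p M" and a: "a < p" and a': "a' < p"
    and eq: "pi_of p M a = pi_of p M a'"
  shows "a = a'"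
proof (rule ccontr)
  assume ne: "a \<noteq> a'"
  let ?b = "pi_of p M a"
  have "R p M a a' = (\<Sum>b<p. if b = ?b then M a ?b * M a' ?b else 0)"
    unfolding R_def using pi_of_props(3)[OF p iso a] by (intro sum.cong refl) auto
  also have "\<dots> = M a ?b * M a' ?b" using pi_of_props(1)[OF p iso a] by (simp add: sum.delta)
  finally have "R p M a a' = M a ?b * M a' ?b" .
  moreover have "M a ?b \<noteq> 0" "M a' ?b \<noteq> 0"
    using pi_of_props(2)[OF p iso a] pi_of_props(2)[OF p iso a'] eq by auto
  ultimately have "R p M a a' \<noteq> 0" by simp
  thus False using iso_R[OF p iso a a'] ne by simp
qed

lemma vchar_single:
  assumes k: "k < p" and z: "\<forall>b<p. b \<noteq> k \<longrightarrow> r b = 0"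
  shows "vchar p r x = of_int (r k) * chi p k x"
proof -
  have "vchar p r x = (\<Sum>b<p. if b = k then of_int (r k) * chi p k x else 0)"
    unfolding vchar_def using z by (intro sum.cong refl) auto
  thus ?thesis using k by (simp add: sum.delta')
qed

lemma mu_form:
  assumes p: "p > 0" and iso: "isometry p M"
  shows "mu p M x y = (\<Sum>a<p. of_int (M a (pi_of p M a)) * chi p (pi_of p M a) x * chi p a y)"
  unfolding mu_def img_def
  by (intro sum.cong refl) (simp add: vchar_single pi_of_props[OF p iso])

lemma chi_0 [simp]: "p > 0 \<Longrightarrow> chi p k 0 = 1"
  by (simp add: chi_def)

lemma sum_only0:
  fixes p :: nat
  assumes "\<forall>y<p. y \<noteq> 0 \<longrightarrow> g y = 0" "p > 0"
  shows "(\<Sum>y<p. g y) = (g 0 :: complex)"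
proof -
  have "(\<Sum>y<p. g y) = (\<Sum>y<p. if y = 0 then g 0 else 0)"
    using assms(1) by (intro sum.cong refl) auto
  also have "\<dots> = g 0" using assms(2) by (subst sum.delta) auto
  finally show ?thesis .
qed

lemma signs:
  assumes p: "p > 0" and iso: "isometry p M" and perf: "perfect p M" and a0: "a0 < p"
  shows "M a0 (pi_of p M a0) = M 0 (pi_of p M 0)"
proof -
  define e where "e a = M a (pi_of p M a)" for a
  have key: "of_int (e a) * of_nat p = mu p M 0 0" if a: "a < p" for a
  proof -
    have "(\<Sum>y<p. mu p M 0 y * chi p a ((p - y) mod p))
        = (\<Sum>y<p. \<Sum>b<p. of_int (e b) * (chi p b y * chi p a ((p - y) mod p)))"
      unfolding mu_form[OF p iso] e_def sum_distrib_right using p by (intro sum.cong refl) (simp add: mult.assoc)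
    also have "\<dots> = (\<Sum>b<p. of_int (e b) * (\<Sum>y<p. chi p b y * chi p a ((p - y) mod p)))"
      by (subst sum.swap) (simp add: sum_distrib_left)
    also have "\<dots> = (\<Sum>b<p. if b = a then of_int (e a) * of_nat p else 0)"
      by (intro sum.cong refl) (simp add: orth p a)
    also have "\<dots> = of_int (e a) * of_nat p" using a by (simp add: sum.delta')
    finally have 1: "(\<Sum>y<p. mu p M 0 y * chi p a ((p - y) mod p)) = of_int (e a) * of_nat p" .
    have "\<forall>y<p. y \<noteq> 0 \<longrightarrow> mu p M 0 y = 0" using perf p unfolding perfect_def by auto
    hence "(\<Sum>y<p. mu p M 0 y * chi p a ((p - y) mod p)) = mu p M 0 0 * chi p a ((p - 0) mod p)"
      using p by (intro sum_only0) auto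
    also have "\<dots> = mu p M 0 0" using p by simp
    finally show ?thesis using 1 by simp
  qed
  have "of_int (e a0) * of_nat p = (of_int (e 0) * of_nat p :: complex)" using key[OF a0] key[OF p] by simp
  hence "e a0 = e 0" using p by simp
  thus ?thesis unfolding e_def .
qed

lemma counting:
  fixes f :: "nat \<Rightarrow> nat" and p k0 :: nat
  assumes fr: "\<forall>a<p. f a < p" and k0: "k0 < p"
    and cong: "\<forall>k<p. int p dvd int (card {a\<in>{..<p}. f a = k}) - int (card {a\<in>{..<p}. f a = k0})"
    and two: "card {a\<in>{..<p}. f a = k0} \<ge> 2"
  shows "\<forall>a<p. f a = k0"
proof -
  define N where "N k = card {a\<in>{..<p}. f a = k}" for k
  have total: "(\<Sum>k<p. N k) = p"
  proof -
    have "(\<Sum>k\<in>{..<p}. \<Sum>a\<in>{x. x \<in> {..<p} \<and> f x = k}. (1::nat)) = (\<Sum>a\<in>{..<p}. 1)"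
      by (rule sum.group) (use fr in auto)
    thus ?thesis unfolding N_def by simp
  qed
  have le: "N k0 \<le> p"
  proof -
    have "N k0 \<le> card {..<p}" unfolding N_def by (rule card_mono) auto
    thus ?thesis by simp
  qed
  have "N k0 = p"
  proof (rule ccontr)
    assume "N k0 \<noteq> p"
    hence lt: "N k0 < p" using le by simp
    have ge: "N k \<ge> 2" if k: "k < p" for k
    proof -
      obtain j where j: "int (N k) - int (N k0) = int p * j" using cong k unfolding N_def by blast
      have "j \<ge> 0"
      proof (rule ccontr)
        assume "\<not> j \<ge> 0"
        hence "j \<le> -1" by simp
        hence "int p * j \<le> int p * (-1)" by (intro mult_left_mono) auto
        hence "int p * j \<le> - int p" by simp
        hence "int (N k) \<le> int (N k0) - int p" using j by linarith
        thus False using lt by linarith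
      qed
      hence "int p * j \<ge> 0" by (intro mult_nonneg_nonneg) auto
      hence "int (N k) \<ge> int (N k0)" using j by linarith
      thus ?thesis using two unfolding N_def by linarith
    qed
    have "(\<Sum>k<p. (2::nat)) \<le> (\<Sum>k<p. N k)" by (rule sum_mono) (simp add: ge)
    hence "2 * p \<le> p" using total by simp
    thus False using k0 by simp
  qed
  hence "{a\<in>{..<p}. f a = k0} = {..<p}"
    unfolding N_def by (intro card_subset_eq) auto
  thus ?thesis by blast
qed

definition smat :: "nat \<Rightarrow> int \<Rightarrow> nat \<Rightarrow> nat \<Rightarrow> nat \<Rightarrow> nat \<Rightarrow> int" where
  "smat p \<epsilon> c t = (\<lambda>a b. if a < p \<and> b < p \<and> b = (c + t * a) mod p then \<epsilon> else 0)"

lemma PI_structure: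
  assumes pr: "prime p" and M: "M \<in> PI p"
  shows "\<exists>\<epsilon> c t. (\<epsilon> = 1 \<or> \<epsilon> = -1) \<and> c < p \<and> 0 < t \<and> t < p \<and> M = smat p \<epsilon> c t"
proof -
  have p1: "p > 1" using pr prime_gt_1_nat by blast
  hence p: "p > 0" by simp
  have Mm: "M \<in> mats p" and iso: "isometry p M" and perf: "perfect p M" using M unfolding PI_def by auto
  define \<pi> where "\<pi> = pi_of p M"
  define \<epsilon> where "\<epsilon> = M 0 (\<pi> 0)"
  have \<pi>p: "\<pi> a < p" if "a < p" for a using pi_of_props(1)[OF p iso that] unfolding \<pi>_def .
  have eps: "\<epsilon> = 1 \<or> \<epsilon> = -1" using pi_of_props(2)[OF p iso p] unfolding \<epsilon>_def \<pi>_def .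
  have e: "M a (\<pi> a) = \<epsilon>" if "a < p" for a using signs[OF p iso perf that] unfolding \<epsilon>_def \<pi>_def .
  have z: "M a b = 0" if "a < p" "b < p" "b \<noteq> \<pi> a" for a b
    using pi_of_props(3)[OF p iso that(1) that(2)] that(3) unfolding \<pi>_def by simp
  have inj: "a = a'" if "a < p" "a' < p" "\<pi> a = \<pi> a'" for a a'
    using pi_of_inj[OF p iso that(1,2)] that(3) unfolding \<pi>_def by simp
  define y0 where "y0 = (\<pi> 0 + p - \<pi> 1) mod p"
  have y0p: "y0 < p" unfolding y0_def using p by simp
  define f where "f a = (\<pi> a + a * y0) mod p" for a
  define N where "N k = card {a\<in>{..<p}. f a = k}" for k
  have fp: "\<forall>a<p. f a < p" unfolding f_def using p by simp
  have mu1: "mu p M 1 y0 = of_int \<epsilon> * (\<Sum>k<p. of_nat (N k) * w p (int k))"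
  proof -
    have "mu p M 1 y0 = (\<Sum>a<p. of_int \<epsilon> * w p (int (f a)))"
      unfolding mu_form[OF p iso] \<pi>_def[symmetric]
    proof (intro sum.cong refl)
      fix a assume "a \<in> {..<p}"
      hence a: "a < p" by simp
      have "chi p (\<pi> a) 1 * chi p a y0 = w p (int (\<pi> a) * 1) * w p (int a * int y0)"
        using p1 y0p by (simp add: chi_w)
      also have "\<dots> = w p (int (\<pi> a + a * y0))" by (simp add: w_add[symmetric])
      also have "\<dots> = w p (int (f a))" unfolding f_def using p by (simp add: zmod_int w_mod)
      finally show "of_int (M a (\<pi> a)) * chi p (\<pi> a) 1 * chi p a y0 = of_int \<epsilon> * w p (int (f a))"
        using e[OF a] by (simp add: mult.assoc)
    qed
    also have "\<dots> = of_int \<epsilon> * (\<Sum>a<p. w p (int (f a)))" by (simp add: sum_distrib_left)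
    also have "(\<Sum>a<p. w p (int (f a))) = (\<Sum>k\<in>{..<p}. \<Sum>a\<in>{x. x \<in> {..<p} \<and> f x = k}. w p (int (f a)))"
      by (rule sum.group[symmetric]) (use fp in auto)
    also have "\<dots> = (\<Sum>k<p. of_nat (N k) * w p (int k))"
    proof (intro sum.cong refl)
      fix k
      have "(\<Sum>a\<in>{x. x \<in> {..<p} \<and> f x = k}. w p (int (f a))) = (\<Sum>a\<in>{x. x \<in> {..<p} \<and> f x = k}. w p (int k))"
        by (rule sum.cong) auto
      thus "(\<Sum>a\<in>{x. x \<in> {..<p} \<and> f x = k}. w p (int (f a))) = of_nat (N k) * w p (int k)"
        unfolding N_def by simp
    qed
    finally show ?thesis .
  qed
  obtain s where s: "coprime s (int p)" "of_int s * (mu p M 1 y0 / of_nat p) \<in> Zzeta p"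
    using perf p1 y0p unfolding perfect_def in_O_def by blast
  then obtain m where m: "of_int s * (mu p M 1 y0 / of_nat p) = (\<Sum>k<p. of_int (m k) * zeta p ^ k)"
    unfolding Zzeta_def by blast
  define D where "D k = s * \<epsilon> * int (N k) - int p * m k" for k
  have "(\<Sum>k<p. of_int (D k) * w p (int k)) = of_int s * mu p M 1 y0 - of_nat p * (\<Sum>k<p. of_int (m k) * w p (int k))"
    unfolding mu1 D_def by (simp add: sum_subtractf sum_distrib_left algebra_simps)
  also have "of_int s * mu p M 1 y0 = of_nat p * (of_int s * (mu p M 1 y0 / of_nat p))" using p by simp
  also have "\<dots> = of_nat p * (\<Sum>k<p. of_int (m k) * w p (int k))" unfolding m by (simp add: zeta_pow)
  finally have "(\<Sum>k<p. of_int (D k) * w p (int k)) = 0" by simp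
  hence Dk: "\<forall>k<p. D k = D 0" by (rule key[OF pr])
  have dv0: "int p dvd int (N k) - int (N 0)" if k: "k < p" for k
  proof -
    have "s * (\<epsilon> * (int (N k) - int (N 0))) = int p * (m k - m 0)"
      using Dk k unfolding D_def by (simp add: algebra_simps)
    hence "int p dvd s * (\<epsilon> * (int (N k) - int (N 0)))" by simp
    hence "int p dvd \<epsilon> * (int (N k) - int (N 0))"
      using s(1) by (subst (asm) coprime_dvd_mult_right_iff) (auto simp: coprime_commute)
    thus ?thesis using eps by (auto, metis minus_diff_eq dvd_minus_iff)
  qed
  have f0: "f 0 = \<pi> 0" unfolding f_def using \<pi>p p by simp
  have f1: "f 1 = \<pi> 0"
  proof -
    have "f 1 = (\<pi> 1 + (\<pi> 0 + p - \<pi> 1)) mod p" unfolding f_def y0_def by (simp add: mod_add_right_eq)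
    also have "\<pi> 1 + (\<pi> 0 + p - \<pi> 1) = \<pi> 0 + 1 * p" using \<pi>p[OF p1] by simp
    also have "(\<pi> 0 + 1 * p) mod p = \<pi> 0 mod p" by (rule mod_mult_self1)
    also have "\<dots> = \<pi> 0" using \<pi>p[OF p] by simp
    finally show ?thesis .
  qed
  have "{0, 1} \<subseteq> {a\<in>{..<p}. f a = \<pi> 0}" using f0 f1 p1 by auto
  hence "card {0::nat, 1} \<le> card {a\<in>{..<p}. f a = \<pi> 0}" by (intro card_mono) auto
  hence two: "card {a\<in>{..<p}. f a = \<pi> 0} \<ge> 2" by simp
  have cong: "\<forall>k<p. int p dvd int (card {a\<in>{..<p}. f a = k}) - int (card {a\<in>{..<p}. f a = \<pi> 0})"
  proof (intro allI impI)
    fix k assume "k < p"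
    have "int p dvd (int (N k) - int (N 0)) - (int (N (\<pi> 0)) - int (N 0))"
      using dv0[OF \<open>k < p\<close>] dv0[OF \<pi>p[OF p]] by (rule dvd_diff)
    thus "int p dvd int (card {a\<in>{..<p}. f a = k}) - int (card {a\<in>{..<p}. f a = \<pi> 0})"
      unfolding N_def by simp
  qed
  have allf: "\<forall>a<p. f a = \<pi> 0" by (rule counting[OF fp \<pi>p[OF p] cong two])
  define t where "t = p - y0"
  have y0ne: "y0 \<noteq> 0"
  proof
    assume "y0 = 0"
    hence "p dvd \<pi> 0 + p - \<pi> 1" unfolding y0_def by (simp add: dvd_eq_mod_eq_0)
    hence "int p dvd int (\<pi> 0 + p - \<pi> 1)" by (simp only: int_dvd_int_iff)
    moreover have "int (\<pi> 0 + p - \<pi> 1) = (int (\<pi> 0) - int (\<pi> 1)) + int p" using \<pi>p[OF p1] by simp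
    ultimately have "int p dvd (int (\<pi> 0) - int (\<pi> 1)) + int p" by (simp only:)
    hence d: "int p dvd (int (\<pi> 0) - int (\<pi> 1))" by (simp add: dvd_add_left_iff)
    have "\<pi> 0 = \<pi> 1"
    proof (rule ccontr)
      assume "\<pi> 0 \<noteq> \<pi> 1"
      obtain j where j: "int (\<pi> 0) - int (\<pi> 1) = int p * j" using d by blast
      have "\<bar>int (\<pi> 0) - int (\<pi> 1)\<bar> < int p" using \<pi>p[OF p] \<pi>p[OF p1] by simp
      moreover have "j \<noteq> 0" using j \<open>\<pi> 0 \<noteq> \<pi> 1\<close> by auto
      hence "\<bar>j\<bar> \<ge> 1" by simp
      hence "int p * \<bar>j\<bar> \<ge> int p * 1" by (intro mult_left_mono) auto
      hence "\<bar>int p * j\<bar> \<ge> int p" by (simp add: abs_mult)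
      ultimately show False using j by simp
    qed
    thus False using inj[OF p p1] by simp
  qed
  have tb: "0 < t" "t < p" unfolding t_def using y0p y0ne by auto
  have \<pi>a: "\<pi> a = (\<pi> 0 + t * a) mod p" if a: "a < p" for a
  proof -
    have "(\<pi> 0 + t * a) mod p = ((\<pi> a + a * y0) mod p + t * a) mod p" using allf a unfolding f_def by simp
    also have "\<dots> = (\<pi> a + a * y0 + t * a) mod p" by (simp add: mod_add_left_eq)
    also have "\<pi> a + a * y0 + t * a = \<pi> a + p * a" unfolding t_def using y0p by (simp add: algebra_simps)
    also have "(\<pi> a + p * a) mod p = \<pi> a" using \<pi>p[OF a] by simp
    finally show ?thesis by simp
  qed
  have "M = smat p \<epsilon> (\<pi> 0) t"
  proof (intro ext)
    fix a b
    show "M a b = smat p \<epsilon> (\<pi> 0) t a b"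
    proof (cases "a < p \<and> b < p")
      case True
      have eq: "\<pi> a = (\<pi> 0 + t * a) mod p" using \<pi>a True by blast
      show ?thesis unfolding smat_def eq[symmetric] using True e z by auto
    next
      case False
      thus ?thesis using Mm unfolding mats_def smat_def by auto
    qed
  qed
  thus ?thesis using eps \<pi>p[OF p] tb by blast
qed

lemma smat_mats: "smat p \<epsilon> c t \<in> mats p"
  unfolding mats_def smat_def by auto

lemma aff_inj:
  fixes p c t a a' :: nat
  assumes pr: "prime p" and t: "0 < t" "t < p" and a: "a < p" and a': "a' < p"
    and eq: "(c + t * a) mod p = (c + t * a') mod p"
  shows "a = a'"
proof -
  have "int ((c + t * a) mod p) = int ((c + t * a') mod p)" using eq by simp
  hence "int (c + t * a) mod int p = int (c + t * a') mod int p" by (simp only: zmod_int)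
  hence "int p dvd int (c + t * a) - int (c + t * a')" by (simp add: mod_eq_dvd_iff)
  hence "int p dvd int t * (int a - int a')" by (simp add: algebra_simps)
  moreover have "prime (int p)" using pr by simp
  ultimately have "int p dvd int t \<or> int p dvd (int a - int a')" using prime_dvd_mult_iff by blast
  moreover have "\<not> int p dvd int t" using t by (auto dest: zdvd_imp_le)
  ultimately have d: "int p dvd (int a - int a')" by blast
  show ?thesis
  proof (rule ccontr)
    assume "a \<noteq> a'"
    obtain j where j: "int a - int a' = int p * j" using d by blast
    have "j \<noteq> 0" using j \<open>a \<noteq> a'\<close> by auto
    hence "\<bar>j\<bar> \<ge> 1" by simp
    hence "int p * \<bar>j\<bar> \<ge> int p * 1" by (intro mult_left_mono) auto
    hence "\<bar>int a - int a'\<bar> \<ge> int p" using j by (simp add: abs_mult)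
    thus False using a a' by simp
  qed
qed

lemma inv_mod:
  fixes p t :: nat
  assumes pr: "prime p" and t: "0 < t" "t < p"
  shows "\<exists>u. 0 < u \<and> u < p \<and> (t * u) mod p = 1"
proof -
  have p1: "p > 1" using pr prime_gt_1_nat by blast
  have inj: "inj_on (\<lambda>u. (0 + t * u) mod p) {..<p}"
  proof (rule inj_onI)
    fix u v assume "u \<in> {..<p}" "v \<in> {..<p}" "(0 + t * u) mod p = (0 + t * v) mod p"
    thus "u = v" using aff_inj[OF pr t, of u v 0] by simp
  qed
  have sub: "(\<lambda>u. (0 + t * u) mod p) ` {..<p} \<subseteq> {..<p}"
  proof
    fix x assume "x \<in> (\<lambda>u. (0 + t * u) mod p) ` {..<p}"
    then obtain u where "x = (0 + t * u) mod p" by blast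
    thus "x \<in> {..<p}" using p1 by simp
  qed
  have "(\<lambda>u. (0 + t * u) mod p) ` {..<p} = {..<p}"
    by (rule endo_inj_surj[OF _ sub inj]) simp
  hence "1 \<in> (\<lambda>u. (0 + t * u) mod p) ` {..<p}" using p1 by simp
  then obtain u where u: "u < p" "(t * u) mod p = 1" by auto
  have "u \<noteq> 0" using u by (intro notI) simp
  thus ?thesis using u by blast
qed

lemma mod_helper1: "(c + t * (x mod p)) mod p = (c + t * x) mod (p::nat)"
proof -
  have "(c + t * (x mod p)) mod p = (c + (t * (x mod p)) mod p) mod p" by (simp only: mod_add_right_eq)
  also have "(t * (x mod p)) mod p = (t * x) mod p" by (rule mod_mult_right_eq)
  also have "(c + (t * x) mod p) mod p = (c + t * x) mod p" by (rule mod_add_right_eq)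
  finally show ?thesis .
qed

lemma mod_helper2: "(c + (x mod p) * t) mod p = (c + x * t) mod (p::nat)"
  using mod_helper1[of c t x p] by (simp add: mult.commute)

lemma mod_helper3: "(x mod p + c) mod p = (x + c) mod (p::nat)"
  by (rule mod_add_left_eq)

lemma mcomp_smat:
  assumes p: "p > 0"
  shows "mcomp p (smat p \<epsilon> c t) (smat p \<epsilon>' c' t') = smat p (\<epsilon> * \<epsilon>') ((c + t * c') mod p) ((t * t') mod p)"
proof (intro ext)
  fix a e
  show "mcomp p (smat p \<epsilon> c t) (smat p \<epsilon>' c' t') a e = smat p (\<epsilon> * \<epsilon>') ((c + t * c') mod p) ((t * t') mod p) a e"
  proof (cases "a < p \<and> e < p")
    case True
    define b0 where "b0 = (c' + t' * a) mod p"
    have b0p: "b0 < p" unfolding b0_def using p by simp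
    have "mcomp p (smat p \<epsilon> c t) (smat p \<epsilon>' c' t') a e = (\<Sum>b<p. smat p \<epsilon>' c' t' a b * smat p \<epsilon> c t b e)"
      unfolding mcomp_def using True by simp
    also have "\<dots> = (\<Sum>b<p. if b = b0 then \<epsilon>' * smat p \<epsilon> c t b0 e else 0)"
      using True by (intro sum.cong refl) (auto simp: smat_def b0_def)
    also have "\<dots> = \<epsilon>' * smat p \<epsilon> c t b0 e" using b0p by (simp add: sum.delta)
    also have "(c + t * b0) mod p = ((c + t * c') mod p + (t * t') mod p * a) mod p"
    proof -
      have "(c + t * b0) mod p = (c + t * (c' + t' * a)) mod p" unfolding b0_def by (rule mod_helper1)
      also have "\<dots> = (c + t * c' + t * t' * a) mod p" by (simp add: algebra_simps)
      also have "\<dots> = ((c + t * c') + (t * t') mod p * a) mod p"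
        using mod_helper2[of "c + t * c'" "t * t'" p a] by simp
      also have "\<dots> = ((c + t * c') mod p + (t * t') mod p * a) mod p"
        by (rule mod_helper3[symmetric])
      finally show ?thesis .
    qed
    hence "\<epsilon>' * smat p \<epsilon> c t b0 e = smat p (\<epsilon> * \<epsilon>') ((c + t * c') mod p) ((t * t') mod p) a e"
      unfolding smat_def using True b0p by auto
    finally show ?thesis .
  next
    case False
    thus ?thesis unfolding mcomp_def smat_def by auto
  qed
qed

lemma smat_id: "smat p 1 0 1 = idmat p"
  unfolding smat_def idmat_def by (intro ext) auto

lemma lmap_Zsupp: "lmap p M c \<in> Zsupp p"
  unfolding lmap_def Zsupp_def by auto

lemma lmap_id: "c \<in> Zsupp p \<Longrightarrow> lmap p (idmat p) c = c"
proof (intro ext)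
  fix b assume c: "c \<in> Zsupp p"
  show "lmap p (idmat p) c b = c b"
  proof (cases "b < p")
    case True
    have "(\<Sum>a<p. c a * idmat p a b) = (\<Sum>a<p. if a = b then c b else 0)"
      using True by (intro sum.cong refl) (auto simp: idmat_def)
    thus ?thesis using True unfolding lmap_def by (simp add: sum.delta')
  next
    case False thus ?thesis using c unfolding lmap_def Zsupp_def by auto
  qed
qed

lemma lmap_mcomp: "lmap p I (lmap p J c) = lmap p (mcomp p I J) c"
proof (intro ext)
  fix b
  show "lmap p I (lmap p J c) b = lmap p (mcomp p I J) c b"
  proof (cases "b < p")
    case True
    have "(\<Sum>a<p. lmap p J c a * I a b) = (\<Sum>a<p. \<Sum>a'<p. c a' * (J a' a * I a b))"
      unfolding lmap_def by (intro sum.cong refl) (simp add: sum_distrib_right mult.assoc)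
    also have "\<dots> = (\<Sum>a'<p. \<Sum>a<p. c a' * (J a' a * I a b))" by (rule sum.swap)
    also have "\<dots> = (\<Sum>a'<p. c a' * mcomp p I J a' b)"
      unfolding mcomp_def using True by (intro sum.cong refl) (simp add: sum_distrib_left)
    finally show ?thesis unfolding lmap_def using True by simp
  next
    case False thus ?thesis unfolding lmap_def by simp
  qed
qed

lemma smat_bij:
  assumes pr: "prime p" and eps: "\<epsilon> = 1 \<or> \<epsilon> = -1" and c: "c < p" and t: "0 < t" "t < p"
  shows "bij_betw (lmap p (smat p \<epsilon> c t)) (Zsupp p) (Zsupp p)"
proof -
  have p1: "p > 1" using pr prime_gt_1_nat by blast
  hence p: "p > 0" by simp
  obtain u where u: "0 < u" "u < p" "(t * u) mod p = 1" using inv_mod[OF pr t] by blast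
  define c' where "c' = (u * (p - c)) mod p"
  define N where "N = smat p \<epsilon> c' u"
  have ee: "\<epsilon> * \<epsilon> = 1" using eps by auto
  have r1: "(c + t * c') mod p = 0"
  proof -
    have "(c + t * c') mod p = (c + t * (u * (p - c))) mod p" unfolding c'_def by (rule mod_helper1)
    also have "\<dots> = (c + (t * u) * (p - c)) mod p" by (simp add: mult.assoc)
    also have "\<dots> = (c + ((t * u) mod p) * (p - c)) mod p" by (rule mod_helper2[symmetric])
    also have "\<dots> = 0" using u c by simp
    finally show ?thesis .
  qed
  have r2: "(c' + u * c) mod p = 0"
  proof -
    have "(c' + u * c) mod p = (u * (p - c) + u * c) mod p" unfolding c'_def by (simp add: mod_add_left_eq)
    also have "u * (p - c) + u * c = p * u" using c by (simp add: algebra_simps diff_mult_distrib2)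
    finally show ?thesis by simp
  qed
  have m1: "mcomp p (smat p \<epsilon> c t) N = idmat p"
    unfolding N_def mcomp_smat[OF p] ee r1 u(3) smat_id[symmetric] ..
  have m2: "mcomp p N (smat p \<epsilon> c t) = idmat p"
    unfolding N_def mcomp_smat[OF p] ee r2 smat_id[symmetric] using u(3) by (simp add: mult.commute)
  show ?thesis
  proof (rule bij_betw_byWitness[where f' = "lmap p N"])
    show "\<forall>a\<in>Zsupp p. lmap p N (lmap p (smat p \<epsilon> c t) a) = a"
      using m2 by (simp add: lmap_mcomp lmap_id)
    show "\<forall>a\<in>Zsupp p. lmap p (smat p \<epsilon> c t) (lmap p N a) = a"
      using m1 by (simp add: lmap_mcomp lmap_id)
  qed (auto simp: lmap_Zsupp)
qed

lemma smat_iso: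
  assumes pr: "prime p" and eps: "\<epsilon> = 1 \<or> \<epsilon> = -1" and t: "0 < t" "t < p"
  shows "isometry p (smat p \<epsilon> c t)"
proof -
  have p: "p > 0" using prime_gt_0_nat[OF pr] .
  show ?thesis
  proof (rule R_iso[OF p], intro allI impI)
    fix a a' assume a: "a < p" and a': "a' < p"
    define b0 where "b0 = (c + t * a) mod p"
    have "R p (smat p \<epsilon> c t) a a' = (\<Sum>b<p. if b = b0 then (if b0 = (c + t * a') mod p then \<epsilon> * \<epsilon> else 0) else 0)"
      unfolding R_def smat_def b0_def using a a' by (intro sum.cong refl) auto
    also have "\<dots> = (if b0 = (c + t * a') mod p then \<epsilon> * \<epsilon> else 0)"
      using p by (simp add: sum.delta b0_def)
    also have "\<dots> = (if a = a' then 1 else 0)"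
      using aff_inj[OF pr t a a'] eps unfolding b0_def by auto
    finally show "R p (smat p \<epsilon> c t) a a' = (if a = a' then 1 else 0)" .
  qed
qed

lemma img_smat:
  assumes p: "p > 0" and a: "a < p"
  shows "img p (smat p \<epsilon> c t) a = (\<lambda>x. of_int \<epsilon> * chi p ((c + t * a) mod p) x)"
proof
  fix x
  show "img p (smat p \<epsilon> c t) a x = of_int \<epsilon> * chi p ((c + t * a) mod p) x"
    unfolding img_def by (subst vchar_single[of "(c + t * a) mod p"]) (use p a in \<open>auto simp: smat_def\<close>)
qed

lemma mu_smat:
  assumes p: "p > 0" and x: "x < p" and y: "y < p"
  shows "mu p (smat p \<epsilon> c t) x y = (if int p dvd (int t * int x + int y) then of_int \<epsilon> * w p (int c * int x) * of_nat p else 0)"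
proof -
  have "mu p (smat p \<epsilon> c t) x y = (\<Sum>a<p. of_int \<epsilon> * w p (int c * int x) * w p ((int t * int x + int y) * int a))"
    unfolding mu_def
  proof (intro sum.cong refl)
    fix a assume "a \<in> {..<p}"
    hence a: "a < p" by simp
    have "chi p ((c + t * a) mod p) x = w p (int ((c + t * a) mod p) * int x)" using x by (simp add: chi_w)
    also have "\<dots> = w p (int (c + t * a) * int x)"
      by (rule w_cong[OF p]) (simp add: zmod_int mod_mult_left_eq)
    finally have 1: "chi p ((c + t * a) mod p) x = w p (int (c + t * a) * int x)" .
    have "chi p ((c + t * a) mod p) x * chi p a y = w p (int c * int x + (int t * int x + int y) * int a)"
      unfolding 1 using y by (simp add: chi_w w_add[symmetric] algebra_simps)
    thus "img p (smat p \<epsilon> c t) a x * chi p a y = of_int \<epsilon> * w p (int c * int x) * w p ((int t * int x + int y) * int a)"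
      unfolding img_smat[OF p a] by (simp add: w_add)
  qed
  also have "\<dots> = of_int \<epsilon> * w p (int c * int x) * (\<Sum>a<p. w p ((int t * int x + int y) * int a))"
    by (simp add: sum_distrib_left)
  also have "\<dots> = (if int p dvd (int t * int x + int y) then of_int \<epsilon> * w p (int c * int x) * of_nat p else 0)"
    by (simp add: geom_w[OF p])
  finally show ?thesis .
qed

lemma w_in_Zzeta:
  assumes p: "p > 0"
  shows "of_int e * w p k \<in> Zzeta p"
proof -
  define k' where "k' = nat (k mod int p)"
  have nn: "k mod int p \<ge> 0" using p by simp
  have k'1: "k' < p" unfolding k'_def using p nn by (subst nat_less_iff) auto
  have "zeta p ^ k' = w p (k mod int p)" unfolding k'_def zeta_pow using nn by simp
  hence k'2: "w p k = zeta p ^ k'" using w_mod[OF p] by simp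
  note k' = k'1 k'2
  have "(\<Sum>j<p. of_int (if j = k' then e else 0) * zeta p ^ j) = (\<Sum>j<p. if j = k' then of_int e * zeta p ^ k' else 0)"
    by (intro sum.cong refl) auto
  also have "\<dots> = of_int e * w p k" using k' by (subst sum.delta) auto
  finally have eq: "of_int e * w p k = (\<Sum>j<p. of_int (if j = k' then e else 0) * zeta p ^ j)" ..
  show ?thesis unfolding Zzeta_def mem_Collect_eq by (rule exI[of _ "\<lambda>j. if j = k' then e else 0"], rule eq)
qed

lemma zero_in_Zzeta: "0 \<in> Zzeta p"
  unfolding Zzeta_def by (rule CollectI, rule exI[of _ "\<lambda>_. 0"]) simp

lemma smat_perfect:
  assumes pr: "prime p" and t: "0 < t" "t < p"
  shows "perfect p (smat p \<epsilon> c t)"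
proof -
  have p: "p > 0" using prime_gt_0_nat[OF pr] .
  have prp: "prime (int p)" using pr by simp
  have A: "in_O p (mu p (smat p \<epsilon> c t) x y / of_nat p)" if x: "x < p" and y: "y < p" for x y
  proof -
    have "of_int 1 * (mu p (smat p \<epsilon> c t) x y / of_nat p) \<in> Zzeta p"
      using p by (simp add: mu_smat[OF p x y] w_in_Zzeta zero_in_Zzeta)
    moreover have "coprime (1::int) (int p)" by simp
    ultimately show ?thesis unfolding in_O_def by blast
  qed
  have B: "(x = 0 \<longleftrightarrow> y = 0)" if x: "x < p" and y: "y < p" and nz: "mu p (smat p \<epsilon> c t) x y \<noteq> 0" for x y
  proof -
    have d: "int p dvd int t * int x + int y" using nz mu_smat[OF p x y] by (auto split: if_splits)
    show ?thesis
    proof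
      assume "x = 0"
      hence "int p dvd int y" using d by simp
      hence "p dvd y" by simp
      thus "y = 0" using y by (auto dest: dvd_imp_le)
    next
      assume "y = 0"
      hence "int p dvd int t * int x" using d by simp
      hence "int p dvd int t \<or> int p dvd int x" using prp prime_dvd_mult_iff by blast
      moreover have "\<not> int p dvd int t" using t by (auto dest: zdvd_imp_le)
      ultimately have "p dvd x" by simp
      thus "x = 0" using x by (auto dest: dvd_imp_le)
    qed
  qed
  show ?thesis unfolding perfect_def using A B by blast
qed

lemma PI_iff:
  assumes pr: "prime p"
  shows "M \<in> PI p \<longleftrightarrow> (\<exists>\<epsilon> c t. (\<epsilon> = 1 \<or> \<epsilon> = -1) \<and> c < p \<and> 0 < t \<and> t < p \<and> M = smat p \<epsilon> c t)"
proof
  assume "M \<in> PI p" thus "\<exists>\<epsilon> c t. (\<epsilon> = 1 \<or> \<epsilon> = -1) \<and> c < p \<and> 0 < t \<and> t < p \<and> M = smat p \<epsilon> c t"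
    by (rule PI_structure[OF pr])
next
  assume "\<exists>\<epsilon> c t. (\<epsilon> = 1 \<or> \<epsilon> = -1) \<and> c < p \<and> 0 < t \<and> t < p \<and> M = smat p \<epsilon> c t"
  then obtain \<epsilon> c t where h: "\<epsilon> = 1 \<or> \<epsilon> = -1" "c < p" "0 < t" "t < p" "M = smat p \<epsilon> c t" by blast
  show "M \<in> PI p" unfolding PI_def h(5)
    using smat_mats smat_bij[OF pr h(1-4)] smat_iso[OF pr h(1) h(3,4)] smat_perfect[OF pr h(3,4)] by blast
qed

definition sig :: "nat \<Rightarrow> nat \<Rightarrow> nat \<Rightarrow> nat" where
  "sig p u = (\<lambda>x. if x < p then (u * x) mod p else x)"

lemma sig_inj:
  assumes pr: "prime p" and u: "0 < u" "u < p"
  shows "inj_on (sig p u) {..<p}"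
proof (rule inj_onI)
  fix x y assume "x \<in> {..<p}" "y \<in> {..<p}" "sig p u x = sig p u y"
  thus "x = y" using aff_inj[OF pr u, of x y 0] unfolding sig_def by simp
qed

lemma sig_bij:
  assumes pr: "prime p" and u: "0 < u" "u < p"
  shows "bij_betw (sig p u) {..<p} {..<p}"
proof -
  have sub: "sig p u ` {..<p} \<subseteq> {..<p}"
  proof
    fix x assume "x \<in> sig p u ` {..<p}"
    then obtain y where "y < p" "x = sig p u y" by blast
    thus "x \<in> {..<p}" unfolding sig_def by simp
  qed
  have "sig p u ` {..<p} = {..<p}" by (rule endo_inj_surj[OF _ sub sig_inj[OF pr u]]) simp
  thus ?thesis using sig_inj[OF pr u] unfolding bij_betw_def by blast
qed

lemma sig_Aut:
  assumes pr: "prime p" and u: "0 < u" "u < p"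
  shows "sig p u \<in> Aut p"
proof -
  have p: "p > 0" using prime_gt_0_nat[OF pr] .
  have add: "sig p u ((x + y) mod p) = (sig p u x + sig p u y) mod p" if "x < p" "y < p" for x y
  proof -
    have "sig p u ((x + y) mod p) = (u * ((x + y) mod p)) mod p" unfolding sig_def using p by simp
    also have "\<dots> = (u * x + u * y) mod p" by (simp add: mod_mult_right_eq distrib_left)
    also have "\<dots> = ((u * x) mod p + (u * y) mod p) mod p" by (simp add: mod_add_eq)
    finally show ?thesis unfolding sig_def using that by simp
  qed
  show ?thesis unfolding Aut_def using sig_bij[OF pr u] add by (auto simp: sig_def)
qed

lemma Aut_char:
  assumes pr: "prime p" and s: "\<sigma> \<in> Aut p"
  shows "0 < \<sigma> 1" "\<sigma> 1 < p" "\<sigma> = sig p (\<sigma> 1)"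
proof -
  have p1: "p > 1" using pr prime_gt_1_nat by blast
  have bij: "bij_betw \<sigma> {..<p} {..<p}" and add: "\<And>x y. x < p \<Longrightarrow> y < p \<Longrightarrow> \<sigma> ((x + y) mod p) = (\<sigma> x + \<sigma> y) mod p"
    and fx: "\<And>x. p \<le> x \<Longrightarrow> \<sigma> x = x" using s unfolding Aut_def by auto
  have lt: "\<sigma> x < p" if "x < p" for x using bij that unfolding bij_betw_def by auto
  have inj: "inj_on \<sigma> {..<p}" using bij unfolding bij_betw_def by auto
  have s0: "\<sigma> 0 = 0"
  proof -
    have "\<sigma> 0 = (\<sigma> 0 + \<sigma> 0) mod p" using add[of 0 0] p1 by simp
    moreover have "\<sigma> 0 < p" using lt p1 by simp
    ultimately show ?thesis
    proof (cases "\<sigma> 0 + \<sigma> 0 < p")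
      case True
      thus ?thesis using \<open>\<sigma> 0 = (\<sigma> 0 + \<sigma> 0) mod p\<close> by simp
    next
      case False
      hence "(\<sigma> 0 + \<sigma> 0) mod p = (\<sigma> 0 + \<sigma> 0 - p) mod p" by (simp add: le_mod_geq)
      also have "\<dots> = \<sigma> 0 + \<sigma> 0 - p" using \<open>\<sigma> 0 < p\<close> by simp
      finally show ?thesis using \<open>\<sigma> 0 = (\<sigma> 0 + \<sigma> 0) mod p\<close> \<open>\<sigma> 0 < p\<close> by simp
    qed
  qed
  have lin: "\<sigma> x = (\<sigma> 1 * x) mod p" if "x < p" for x
    using that
  proof (induction x)
    case 0 thus ?case using s0 by simp
  next
    case (Suc x)
    have "\<sigma> (Suc x) = \<sigma> ((x + 1) mod p)" using Suc.prems by simp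
    also have "\<dots> = (\<sigma> x + \<sigma> 1) mod p" using add[of x 1] Suc.prems p1 by simp
    also have "\<dots> = ((\<sigma> 1 * x) mod p + \<sigma> 1) mod p" using Suc by simp
    also have "\<dots> = (\<sigma> 1 * x + \<sigma> 1) mod p" by (simp add: mod_add_left_eq)
    also have "\<sigma> 1 * x + \<sigma> 1 = \<sigma> 1 * Suc x" by simp
    finally show ?case .
  qed
  show "\<sigma> 1 < p" using lt p1 by simp
  show "0 < \<sigma> 1"
  proof (rule ccontr)
    assume "\<not> 0 < \<sigma> 1"
    hence "\<sigma> 1 = \<sigma> 0" using s0 by simp
    moreover have "(1::nat) \<in> {..<p}" "(0::nat) \<in> {..<p}" using p1 by auto
    ultimately have "1 = (0::nat)" by (rule inj_onD[OF inj])
    thus False by simp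
  qed
  show "\<sigma> = sig p (\<sigma> 1)"
  proof
    fix x show "\<sigma> x = sig p (\<sigma> 1) x"
    proof (cases "x < p")
      case True thus ?thesis unfolding sig_def using lin[of x] by simp
    next
      case False thus ?thesis unfolding sig_def using fx[of x] by simp
    qed
  qed
qed

lemma chi_add: "p > 0 \<Longrightarrow> chi p ((c + a) mod p) x = chi p c x * chi p a x"
proof (cases "x < p")
  case True
  assume p: "p > 0"
  have "chi p ((c + a) mod p) x = w p (int ((c + a) mod p) * int x)" using True by (simp add: chi_w)
  also have "\<dots> = w p (int (c + a) * int x)" by (rule w_cong[OF p]) (simp add: zmod_int mod_mult_left_eq)
  also have "\<dots> = w p (int c * int x) * w p (int a * int x)" by (simp add: w_add[symmetric] algebra_simps)
  finally show ?thesis using True by (simp add: chi_w)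
next
  case False thus ?thesis by (simp add: chi_def)
qed

lemma I_lam_chi:
  assumes pr: "prime p" and c: "c < p"
  shows "I_lam p (chi p c) = smat p 1 c 1"
proof -
  have p: "p > 0" using prime_gt_0_nat[OF pr] .
  show ?thesis unfolding I_lam_def
  proof (rule mat_of_eq[OF p smat_mats], intro allI impI)
    fix a assume a: "a < p"
    show "vchar p (smat p 1 c 1 a) = (\<lambda>x. chi p c x * chi p a x)"
      using img_smat[OF p a, of 1 c 1] unfolding img_def by (simp add: chi_add[OF p])
  qed
qed

lemma I_sig_sig:
  assumes pr: "prime p" and u: "0 < u" "u < p" and t: "t < p" and ut: "(u * t) mod p = 1"
  shows "I_sig p (sig p u) = smat p 1 0 t"
proof -
  have p: "p > 0" using prime_gt_0_nat[OF pr] .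
  have inv: "inv_into {..<p} (sig p u) h = (t * h) mod p" if h: "h < p" for h
  proof (rule inv_into_f_eq[OF sig_inj[OF pr u]])
    show "(t * h) mod p \<in> {..<p}" using p by simp
    have "sig p u ((t * h) mod p) = (u * ((t * h) mod p)) mod p" unfolding sig_def using p by simp
    also have "\<dots> = ((u * t) * h) mod p" by (simp add: mod_mult_right_eq mult.assoc)
    also have "\<dots> = (((u * t) mod p) * h) mod p" by (simp add: mod_mult_left_eq)
    also have "\<dots> = h" using ut h by simp
    finally show "sig p u ((t * h) mod p) = h" .
  qed
  show ?thesis unfolding I_sig_def
  proof (rule mat_of_eq[OF p smat_mats], intro allI impI)
    fix a assume a: "a < p"
    show "vchar p (smat p 1 0 t a) = chi_act p (sig p u) (chi p a)"
    proof
      fix x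
      show "vchar p (smat p 1 0 t a) x = chi_act p (sig p u) (chi p a) x"
      proof (cases "x < p")
        case True
        have "vchar p (smat p 1 0 t a) x = chi p ((t * a) mod p) x"
          using img_smat[OF p a, of 1 0 t] unfolding img_def by simp
        also have "\<dots> = w p (int ((t * a) mod p) * int x)" using True by (simp add: chi_w)
        also have "\<dots> = w p (int a * int ((t * x) mod p))"
          by (rule w_cong[OF p]) (simp add: zmod_int mod_mult_left_eq mod_mult_right_eq ac_simps)
        also have "\<dots> = chi p a ((t * x) mod p)" using p by (simp add: chi_w)
        also have "\<dots> = chi_act p (sig p u) (chi p a) x" unfolding chi_act_def using True inv by simp
        finally show ?thesis .
      next
        case False
        thus ?thesis using img_smat[OF p a, of 1 0 t] unfolding img_def chi_act_def by (simp add: chi_def)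
      qed
    qed
  qed
qed

lemma smat_param_inj:
  assumes pr: "prime p" and c: "c < p" "c' < p" and t: "0 < t" "t < p" "0 < t'" "t' < p"
    and e: "\<epsilon> \<noteq> 0" and eq: "smat p \<epsilon> c t = smat p \<epsilon>' c' t'"
  shows "\<epsilon> = \<epsilon>' \<and> c = c' \<and> t = t'"
proof -
  have p1: "p > 1" using pr prime_gt_1_nat by blast
  have "smat p \<epsilon> c t 0 c = \<epsilon>" using c p1 by (simp add: smat_def)
  hence 1: "smat p \<epsilon>' c' t' 0 c = \<epsilon>" using eq by simp
  hence cc: "c = c'" using e c p1 unfolding smat_def by (auto split: if_splits)
  hence ee: "\<epsilon> = \<epsilon>'" using 1 c p1 unfolding smat_def by (auto split: if_splits)
  have "smat p \<epsilon> c t 1 ((c + t * 1) mod p) = \<epsilon>" using p1 by (simp add: smat_def)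
  hence "smat p \<epsilon>' c' t' 1 ((c + t * 1) mod p) = \<epsilon>" using eq by simp
  hence "(c + t * 1) mod p = (c + t' * 1) mod p" using e cc unfolding smat_def by (auto split: if_splits)
  hence "(c + 1 * t) mod p = (c + 1 * t') mod p" by simp
  hence "t = t'" using aff_inj[OF pr, where t=1 and a=t and a'=t' and c=c] p1 t by simp
  thus ?thesis using cc ee by simp
qed

lemma Aut_comp:
  assumes pr: "prime p" and s: "\<sigma> \<in> Aut p" and s': "\<sigma>' \<in> Aut p"
  shows "\<sigma> \<circ> \<sigma>' \<in> Aut p" "(\<sigma> \<circ> \<sigma>') 1 = (\<sigma> 1 * \<sigma>' 1) mod p"
proof -
  have p1: "p > 1" using pr prime_gt_1_nat by blast
  note A = Aut_char[OF pr s] and A' = Aut_char[OF pr s']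
  define v where "v = (\<sigma> 1 * \<sigma>' 1) mod p"
  have v: "0 < v" "v < p"
  proof -
    show "v < p" unfolding v_def using p1 by simp
    show "0 < v"
    proof (rule ccontr)
      assume "\<not> 0 < v"
      hence "p dvd \<sigma> 1 * \<sigma>' 1" unfolding v_def by (simp add: dvd_eq_mod_eq_0)
      hence "p dvd \<sigma> 1 \<or> p dvd \<sigma>' 1" using pr prime_dvd_mult_iff by blast
      thus False using A(1,2) A'(1,2) by (auto dest: dvd_imp_le)
    qed
  qed
  have eq: "\<sigma> \<circ> \<sigma>' = sig p v"
  proof
    fix x
    show "(\<sigma> \<circ> \<sigma>') x = sig p v x"
    proof (cases "x < p")
      case True
      have "(\<sigma> \<circ> \<sigma>') x = sig p (\<sigma> 1) (sig p (\<sigma>' 1) x)" using A(3) A'(3) by (metis comp_apply)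
      also have "\<dots> = (\<sigma> 1 * ((\<sigma>' 1 * x) mod p)) mod p" unfolding sig_def using True p1 by simp
      also have "\<dots> = ((\<sigma> 1 * \<sigma>' 1) * x) mod p" by (simp add: mod_mult_right_eq mult.assoc)
      also have "\<dots> = (v * x) mod p" unfolding v_def by (simp add: mod_mult_left_eq)
      finally show ?thesis unfolding sig_def using True by simp
    next
      case False
      have "(\<sigma> \<circ> \<sigma>') x = sig p (\<sigma> 1) (sig p (\<sigma>' 1) x)" using A(3) A'(3) by (metis comp_apply)
      thus ?thesis unfolding sig_def using False by simp
    qed
  qed
  show "\<sigma> \<circ> \<sigma>' \<in> Aut p" unfolding eq by (rule sig_Aut[OF pr v])
  show "(\<sigma> \<circ> \<sigma>') 1 = (\<sigma> 1 * \<sigma>' 1) mod p" unfolding eq sig_def v_def using p1 by simp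
qed

definition psi :: "nat \<Rightarrow> (nat \<times> (nat \<Rightarrow> nat)) \<times> int \<Rightarrow> nat \<Rightarrow> nat \<Rightarrow> int" where
  "psi p x = smat p (snd x) (fst (fst x)) (snd (fst x) 1)"

lemma psi_bij:
  assumes pr: "prime p"
  shows "bij_betw (psi p) (carrier (sdp p \<times>\<times> C2)) (PI p)"
proof -
  have p1: "p > 1" using pr prime_gt_1_nat by blast
  have car: "carrier (sdp p \<times>\<times> C2) = ({..<p} \<times> Aut p) \<times> {1, -1}"
    unfolding DirProd_def sdp_def C2_def by simp
  show ?thesis unfolding bij_betw_def
  proof
    show "inj_on (psi p) (carrier (sdp p \<times>\<times> C2))"
    proof (rule inj_onI)
      fix x y assume x: "x \<in> carrier (sdp p \<times>\<times> C2)" and y: "y \<in> carrier (sdp p \<times>\<times> C2)"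
        and eq: "psi p x = psi p y"
      obtain h \<sigma> e where xx: "x = ((h, \<sigma>), e)" "h < p" "\<sigma> \<in> Aut p" "e = 1 \<or> e = -1" using x car by auto
      obtain h' \<sigma>' e' where yy: "y = ((h', \<sigma>'), e')" "h' < p" "\<sigma>' \<in> Aut p" "e' = 1 \<or> e' = -1" using y car by auto
      have "e = e' \<and> h = h' \<and> \<sigma> 1 = \<sigma>' 1"
        using eq unfolding xx yy psi_def
        by (intro smat_param_inj[OF pr]) (use xx yy Aut_char[OF pr] in auto)
      moreover have "\<sigma> = \<sigma>'" using calculation Aut_char(3)[OF pr xx(3)] Aut_char(3)[OF pr yy(3)] by metis
      ultimately show "x = y" using xx yy by simp
    qed
    show "psi p ` carrier (sdp p \<times>\<times> C2) = PI p"
    proof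
      show "psi p ` carrier (sdp p \<times>\<times> C2) \<subseteq> PI p"
      proof
        fix M assume "M \<in> psi p ` carrier (sdp p \<times>\<times> C2)"
        then obtain h \<sigma> e where "M = psi p ((h, \<sigma>), e)" "h < p" "\<sigma> \<in> Aut p" "e = 1 \<or> e = -1" using car by auto
        moreover have "0 < \<sigma> 1" "\<sigma> 1 < p" using Aut_char[OF pr \<open>\<sigma> \<in> Aut p\<close>] by auto
        ultimately show "M \<in> PI p" unfolding PI_iff[OF pr]
          by (intro exI[of _ e] exI[of _ h] exI[of _ "\<sigma> 1"]) (auto simp: psi_def)
      qed
      show "PI p \<subseteq> psi p ` carrier (sdp p \<times>\<times> C2)"
      proof
        fix M assume "M \<in> PI p"
        then obtain e c t where h: "e = 1 \<or> e = -1" "c < p" "0 < t" "t < p" "M = smat p e c t"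
          unfolding PI_iff[OF pr] by blast
        have "sig p t 1 = t" unfolding sig_def using p1 h by simp
        hence "M = psi p ((c, sig p t), e)" unfolding psi_def h(5) by simp
        moreover have "((c, sig p t), e) \<in> carrier (sdp p \<times>\<times> C2)" unfolding car using h sig_Aut[OF pr h(3,4)] by auto
        ultimately show "M \<in> psi p ` carrier (sdp p \<times>\<times> C2)" by blast
      qed
    qed
  qed
qed

lemma psi_mult:
  assumes pr: "prime p" and x: "x \<in> carrier (sdp p \<times>\<times> C2)" and y: "y \<in> carrier (sdp p \<times>\<times> C2)"
  shows "x \<otimes>\<^bsub>sdp p \<times>\<times> C2\<^esub> y \<in> carrier (sdp p \<times>\<times> C2)"
    "psi p (x \<otimes>\<^bsub>sdp p \<times>\<times> C2\<^esub> y) = mcomp p (psi p x) (psi p y)"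
proof -
  have p1: "p > 1" using pr prime_gt_1_nat by blast
  have car: "carrier (sdp p \<times>\<times> C2) = ({..<p} \<times> Aut p) \<times> {1, -1}"
    unfolding DirProd_def sdp_def C2_def by simp
  obtain h \<sigma> e where xx: "x = ((h, \<sigma>), e)" "h < p" "\<sigma> \<in> Aut p" "e = 1 \<or> e = -1" using x car by auto
  obtain h' \<sigma>' e' where yy: "y = ((h', \<sigma>'), e')" "h' < p" "\<sigma>' \<in> Aut p" "e' = 1 \<or> e' = -1" using y car by auto
  have prod: "x \<otimes>\<^bsub>sdp p \<times>\<times> C2\<^esub> y = (((h + \<sigma> h') mod p, \<sigma> \<circ> \<sigma>'), e * e')"
    unfolding xx yy DirProd_def sdp_def C2_def by simp
  show "x \<otimes>\<^bsub>sdp p \<times>\<times> C2\<^esub> y \<in> carrier (sdp p \<times>\<times> C2)"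
    unfolding prod car using Aut_comp(1)[OF pr xx(3) yy(3)] p1 xx(4) yy(4) by auto
  have sh: "\<sigma> h' = (\<sigma> 1 * h') mod p"
  proof -
    have "\<sigma> h' = sig p (\<sigma> 1) h'" using Aut_char(3)[OF pr xx(3)] by metis
    thus ?thesis unfolding sig_def using yy(2) by simp
  qed
  have "psi p (x \<otimes>\<^bsub>sdp p \<times>\<times> C2\<^esub> y) = smat p (e * e') ((h + \<sigma> h') mod p) ((\<sigma> 1 * \<sigma>' 1) mod p)"
    unfolding prod psi_def using Aut_comp(2)[OF pr xx(3) yy(3)] by simp
  also have "(h + \<sigma> h') mod p = (h + \<sigma> 1 * h') mod p" unfolding sh by (rule mod_add_right_eq)
  also have "smat p (e * e') ((h + \<sigma> 1 * h') mod p) ((\<sigma> 1 * \<sigma>' 1) mod p) = mcomp p (psi p x) (psi p y)"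
    unfolding xx yy psi_def using p1 by (simp add: mcomp_smat)
  finally show "psi p (x \<otimes>\<^bsub>sdp p \<times>\<times> C2\<^esub> y) = mcomp p (psi p x) (psi p y)" .
qed

lemma iso_part:
  assumes pr: "prime p"
  shows "PI_group p \<cong> sdp p \<times>\<times> C2"
proof -
  let ?A = "carrier (sdp p \<times>\<times> C2)"
  define phi where "phi = inv_into ?A (psi p)"
  have bij: "bij_betw (psi p) ?A (PI p)" by (rule psi_bij[OF pr])
  have bphi: "bij_betw phi (PI p) ?A" unfolding phi_def by (rule bij_betw_inv_into[OF bij])
  have left: "phi (psi p z) = z" if "z \<in> ?A" for z
    unfolding phi_def using bij that by (simp add: bij_betw_def inv_into_f_f)
  have right: "psi p (phi X) = X" if "X \<in> PI p" for X
    unfolding phi_def using bij that by (simp add: bij_betw_def f_inv_into_f)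
  have inA: "phi X \<in> ?A" if "X \<in> PI p" for X using bphi that unfolding bij_betw_def by auto
  have "phi \<in> iso (PI_group p) (sdp p \<times>\<times> C2)"
    unfolding iso_def hom_def
  proof (intro CollectI conjI)
    show "phi \<in> carrier (PI_group p) \<rightarrow> ?A" unfolding PI_group_def using inA by auto
    show "bij_betw phi (carrier (PI_group p)) ?A" unfolding PI_group_def using bphi by simp
    show "\<forall>X\<in>carrier (PI_group p). \<forall>Y\<in>carrier (PI_group p).
            phi (X \<otimes>\<^bsub>PI_group p\<^esub> Y) = phi X \<otimes>\<^bsub>sdp p \<times>\<times> C2\<^esub> phi Y"
    proof (intro ballI)
      fix X Y assume X: "X \<in> carrier (PI_group p)" and Y: "Y \<in> carrier (PI_group p)"
      hence X': "X \<in> PI p" and Y': "Y \<in> PI p" unfolding PI_group_def by auto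
      have "X \<otimes>\<^bsub>PI_group p\<^esub> Y = mcomp p (psi p (phi X)) (psi p (phi Y))"
        unfolding PI_group_def using right X' Y' by simp
      also have "\<dots> = psi p (phi X \<otimes>\<^bsub>sdp p \<times>\<times> C2\<^esub> phi Y)"
        using psi_mult(2)[OF pr inA[OF X'] inA[OF Y']] by simp
      finally have "phi (X \<otimes>\<^bsub>PI_group p\<^esub> Y) = phi (psi p (phi X \<otimes>\<^bsub>sdp p \<times>\<times> C2\<^esub> phi Y))" by simp
      also have "\<dots> = phi X \<otimes>\<^bsub>sdp p \<times>\<times> C2\<^esub> phi Y"
        by (rule left[OF psi_mult(1)[OF pr inA[OF X'] inA[OF Y']]])
      finally show "phi (X \<otimes>\<^bsub>PI_group p\<^esub> Y) = phi X \<otimes>\<^bsub>sdp p \<times>\<times> C2\<^esub> phi Y" .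
    qed
  qed
  thus ?thesis unfolding is_iso_def by blast
qed

theorem mainTheorem4:
  fixes p :: nat
  assumes "prime p"
  shows "(\<forall>I\<in>PI p. (\<forall>a<p. img p I a \<in> Irr p) \<or> (\<forall>a<p. - img p I a \<in> Irr p))
       \<and> (\<forall>I\<in>PI p. (\<forall>a<p. img p I a \<in> Irr p) \<longrightarrow>
            (\<exists>fs. set fs \<subseteq> I_lam p ` Irr p \<union> I_sig p ` Aut p \<and>
                  I = foldr (mcomp p) fs (idmat p)))
       \<and> PI_group p \<cong> sdp p \<times>\<times> C2"
proof -
  note pr = assms
  have p1: "p > 1" using pr prime_gt_1_nat by blast
  hence p: "p > 0" by simp
  have P1: "(\<forall>a<p. img p I a \<in> Irr p) \<or> (\<forall>a<p. - img p I a \<in> Irr p)" if I: "I \<in> PI p" for I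
  proof -
    obtain e c t where h: "e = 1 \<or> e = -1" "c < p" "0 < t" "t < p" "I = smat p e c t"
      using I unfolding PI_iff[OF pr] by blast
    have k: "(c + t * a) mod p \<in> {..<p}" for a using p by simp
    from h(1) show ?thesis
    proof
      assume "e = 1"
      hence "\<forall>a<p. img p I a = chi p ((c + t * a) mod p)" unfolding h(5) using img_smat[OF p] by auto
      thus ?thesis unfolding Irr_def using k by auto
    next
      assume "e = -1"
      hence "\<forall>a<p. - img p I a = chi p ((c + t * a) mod p)" unfolding h(5) using img_smat[OF p] by auto
      thus ?thesis unfolding Irr_def using k by auto
    qed
  qed
  have P2: "\<exists>fs. set fs \<subseteq> I_lam p ` Irr p \<union> I_sig p ` Aut p \<and> I = foldr (mcomp p) fs (idmat p)"
    if I: "I \<in> PI p" and pos: "\<forall>a<p. img p I a \<in> Irr p" for I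
  proof -
    obtain e c t where h: "e = 1 \<or> e = -1" "c < p" "0 < t" "t < p" "I = smat p e c t"
      using I unfolding PI_iff[OF pr] by blast
    have e1: "e = 1"
    proof (rule ccontr)
      assume "e \<noteq> 1"
      hence em: "e = -1" using h(1) by simp
      have "img p I 0 \<in> Irr p" using pos p by simp
      then obtain k where "k < p" "img p I 0 = chi p k" unfolding Irr_def by auto
      hence "img p I 0 0 = chi p k 0" by simp
      moreover have "img p I 0 0 = -1" unfolding h(5) em img_smat[OF p p] using p by simp
      moreover have "chi p k 0 = 1" using p by simp
      ultimately show False by simp
    qed
    obtain u where u: "0 < u" "u < p" "(t * u) mod p = 1" using inv_mod[OF pr h(3,4)] by blast
    define fs where "fs = [I_lam p (chi p c), I_sig p (sig p u)]"
    have L: "I_lam p (chi p c) = smat p 1 c 1" by (rule I_lam_chi[OF pr h(2)])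
    have S: "I_sig p (sig p u) = smat p 1 0 t" by (rule I_sig_sig[OF pr u(1,2) h(4)]) (use u(3) in \<open>simp add: mult.commute\<close>)
    have "set fs \<subseteq> I_lam p ` Irr p \<union> I_sig p ` Aut p"
      unfolding fs_def Irr_def using h(2) sig_Aut[OF pr u(1,2)] by auto
    moreover have "foldr (mcomp p) fs (idmat p) = I"
    proof -
      have "foldr (mcomp p) fs (idmat p) = mcomp p (smat p 1 c 1) (mcomp p (smat p 1 0 t) (smat p 1 0 1))"
        unfolding fs_def L S smat_id[symmetric] by simp
      also have "\<dots> = smat p 1 c t" using h(2,4) by (simp add: mcomp_smat[OF p])
      finally show ?thesis unfolding h(5) e1 .
    qed
    ultimately show ?thesis by metis
  qed
  show ?thesis using P1 P2 iso_part[OF pr] by blast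
qed

end
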